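(* Let $\Sigma$ be a signed graph and $v$ a vertex of $\Sigma$ such that every block of $\Sigma$ containing $v$ contains a circle, and let $C$ be a circle containing $v$. Then $[v,C,-]$ is a negative vertex battery (i.e. $C$ is negative and is the only negative circle of $\Sigma$ containing $v$) if and only if: (1) the block $B$ of $\Sigma$ containing $C$ is the only unbalanced block of $\Sigma$ containing $v$, and $\deg_B(v)=2$; and (2) $[e_v, C{\downarrow}v, -]$ is a negative edge battery in $B{\downarrow}v$, i.e. $C{\downarrow}v$ is the only negative circle of $B{\downarrow}v$ containing $e_v$.
   Context: A signed graph $\Sigma=(G,\sigma)$ is a finite graph $G$ with signature $\sigma:E(G)\to\{+,-\}$. A circle is a connected 2-regular subgraph; its sign is the product of its edge signs. A subgraph is balanced if all its circles are positive, unbalanced otherwise. A block is a maximal subgraph without a cutpoint; $\deg_B(v)$ is the number of edges of $B$ incident with $v$. If $\deg_B(v)=2$ with incident edges $vv_1,vv_2$ in $B$, suppressing $v$ means deleting $v$ and these two edges and adding a new edge $e_v$ joining $v_1$ and $v_2$ with sign $\sigma(vv_1)\sigma(vv_2)$; the result is the signed graph $B{\downarrow}v$, and for a circle $C$ of $B$ through $v$, $C{\downarrow}v$ is the corresponding circle of $B{\downarrow}v$ through $e_v$. *)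

theory Defs
  imports Main
begin

text \<open>Finite signed (multi)graphs: edges have one (loop) or two (link) endpoints.
  neg e = True means the edge e has sign minus.\<close>
record ('v,'e) sgraph =
  verts :: "'v set"
  edges :: "'e set"
  ends  :: "'e \<Rightarrow> 'v set"
  neg   :: "'e \<Rightarrow> bool"

definition sgraph_wf :: "('v,'e) sgraph \<Rightarrow> bool" where
  "sgraph_wf G \<longleftrightarrow> finite (verts G) \<and> finite (edges G) \<and>
     (\<forall>e\<in>edges G. ends G e \<subseteq> verts G \<and> (card (ends G e) = 1 \<or> card (ends G e) = 2))"

type_synonym ('v,'e) subg = "'v set \<times> 'e set"

definition is_sub :: "('v,'e) sgraph \<Rightarrow> ('v,'e) subg \<Rightarrow> bool" where
  "is_sub G H \<longleftrightarrow> fst H \<subseteq> verts G \<and> snd H \<subseteq> edges G \<and>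
     (\<forall>e\<in>snd H. ends G e \<subseteq> fst H)"

definition sub_le :: "('v,'e) subg \<Rightarrow> ('v,'e) subg \<Rightarrow> bool" where
  "sub_le H H' \<longleftrightarrow> fst H \<subseteq> fst H' \<and> snd H \<subseteq> snd H'"

definition adj_in :: "('v,'e) sgraph \<Rightarrow> 'e set \<Rightarrow> 'v \<Rightarrow> 'v \<Rightarrow> bool" where
  "adj_in G F x y \<longleftrightarrow> (\<exists>e\<in>F. x \<in> ends G e \<and> y \<in> ends G e)"

definition connected_sub :: "('v,'e) sgraph \<Rightarrow> ('v,'e) subg \<Rightarrow> bool" where
  "connected_sub G H \<longleftrightarrow> fst H \<noteq> {} \<and>
     (\<forall>x\<in>fst H. \<forall>y\<in>fst H. (adj_in G (snd H))\<^sup>*\<^sup>* x y)"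

definition deg_in :: "('v,'e) sgraph \<Rightarrow> 'e set \<Rightarrow> 'v \<Rightarrow> nat" where
  "deg_in G F x = 2 * card {e\<in>F. ends G e = {x}} +
                  card {e\<in>F. x \<in> ends G e \<and> card (ends G e) = 2}"

definition circle :: "('v,'e) sgraph \<Rightarrow> ('v,'e) subg \<Rightarrow> bool" where
  "circle G H \<longleftrightarrow> is_sub G H \<and> connected_sub G H \<and> (\<forall>x\<in>fst H. deg_in G (snd H) x = 2)"

definition negative :: "('v,'e) sgraph \<Rightarrow> ('v,'e) subg \<Rightarrow> bool" where
  "negative G H \<longleftrightarrow> odd (card {e\<in>snd H. neg G e})"

definition restr :: "('v,'e) sgraph \<Rightarrow> ('v,'e) subg \<Rightarrow> ('v,'e) sgraph" where
  "restr G H = G\<lparr>verts := fst H, edges := snd H\<rparr>"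

definition unbalanced :: "('v,'e) sgraph \<Rightarrow> bool" where
  "unbalanced G \<longleftrightarrow> (\<exists>C. circle G C \<and> negative G C)"

definition has_cutpoint :: "('v,'e) sgraph \<Rightarrow> ('v,'e) subg \<Rightarrow> bool" where
  "has_cutpoint G H \<longleftrightarrow> (\<exists>x F1 F2. F1 \<union> F2 = snd H \<and> F1 \<inter> F2 = {} \<and> F1 \<noteq> {} \<and> F2 \<noteq> {} \<and>
      (\<Union>(ends G ` F1)) \<inter> (\<Union>(ends G ` F2)) \<subseteq> {x})"

definition inseparable :: "('v,'e) sgraph \<Rightarrow> ('v,'e) subg \<Rightarrow> bool" where
  "inseparable G H \<longleftrightarrow> is_sub G H \<and> connected_sub G H \<and> \<not> has_cutpoint G H"

definition block :: "('v,'e) sgraph \<Rightarrow> ('v,'e) subg \<Rightarrow> bool" where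
  "block G B \<longleftrightarrow> inseparable G B \<and> (\<forall>H. inseparable G H \<and> sub_le B H \<longrightarrow> H = B)"

text \<open>Suppression of v in block B, where e1, e2 are the two edges of B at v.
  Old edges e become Some e; the new edge e_v is None.\<close>
definition suppress :: "('v,'e) sgraph \<Rightarrow> ('v,'e) subg \<Rightarrow> 'v \<Rightarrow> 'e \<Rightarrow> 'e \<Rightarrow> ('v, 'e option) sgraph" where
  "suppress G B v e1 e2 = \<lparr>verts = fst B - {v},
     edges = Some ` (snd B - {e1, e2}) \<union> {None},
     ends = (\<lambda>x. case x of None \<Rightarrow> (ends G e1 \<union> ends G e2) - {v} | Some e \<Rightarrow> ends G e),
     neg = (\<lambda>x. case x of None \<Rightarrow> (neg G e1 \<noteq> neg G e2) | Some e \<Rightarrow> neg G e)\<rparr>"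

definition circ_suppress :: "('v,'e) subg \<Rightarrow> 'v \<Rightarrow> 'e \<Rightarrow> 'e \<Rightarrow> ('v, 'e option) subg" where
  "circ_suppress C v e1 e2 = (fst C - {v}, Some ` (snd C - {e1, e2}) \<union> {None})"

definition neg_vertex_battery :: "('v,'e) sgraph \<Rightarrow> 'v \<Rightarrow> ('v,'e) subg \<Rightarrow> bool" where
  "neg_vertex_battery G v C \<longleftrightarrow> circle G C \<and> v \<in> fst C \<and> negative G C \<and>
     (\<forall>D. circle G D \<and> v \<in> fst D \<and> negative G D \<longrightarrow> D = C)"

definition neg_edge_battery :: "('v,'e) sgraph \<Rightarrow> 'e \<Rightarrow> ('v,'e) subg \<Rightarrow> bool" where
  "neg_edge_battery G e C \<longleftrightarrow> circle G C \<and> e \<in> snd C \<and> negative G C \<and>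
     (\<forall>D. circle G D \<and> e \<in> snd D \<and> negative G D \<longrightarrow> D = C)"

end

theory Submission
  imports Defs
begin


lemma wf_fin: "sgraph_wf G \<Longrightarrow> finite (verts G)" "sgraph_wf G \<Longrightarrow> finite (edges G)"
  by (auto simp: sgraph_wf_def)

lemma wf_ends: "sgraph_wf G \<Longrightarrow> e \<in> edges G \<Longrightarrow> ends G e \<subseteq> verts G"
  "sgraph_wf G \<Longrightarrow> e \<in> edges G \<Longrightarrow> card (ends G e) = 1 \<or> card (ends G e) = 2"
  by (auto simp: sgraph_wf_def)

lemma wf_ends_cases:
  assumes "sgraph_wf G" "e \<in> edges G"
  obtains x where "ends G e = {x}" | x y where "x \<noteq> y" "ends G e = {x,y}"
  using wf_ends(2)[OF assms] by (metis card_1_singletonE card_2_iff)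

lemma deg_in_union:
  assumes "finite A" "finite B" "A \<inter> B = {}"
  shows "deg_in G (A \<union> B) x = deg_in G A x + deg_in G B x"
proof -
  have 1: "{e\<in>A\<union>B. ends G e = {x}} = {e\<in>A. ends G e = {x}} \<union> {e\<in>B. ends G e = {x}}" by auto
  have 2: "{e\<in>A\<union>B. x \<in> ends G e \<and> card (ends G e) = 2} =
     {e\<in>A. x \<in> ends G e \<and> card (ends G e) = 2} \<union> {e\<in>B. x \<in> ends G e \<and> card (ends G e) = 2}" by auto
  show ?thesis unfolding deg_in_def 1 2
    by (subst card_Un_disjoint, use assms in auto)+ 
qed

lemma deg_in_single:
  "deg_in G {e} x = (if ends G e = {x} then 2 else if x \<in> ends G e \<and> card (ends G e) = 2 then 1 else 0)"
proof -
  have a: "{ea\<in>{e}. ends G ea = {x}} = (if ends G e = {x} then {e} else {})" by auto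
  have b: "{ea\<in>{e}. x \<in> ends G ea \<and> card (ends G ea) = 2} = (if x \<in> ends G e \<and> card (ends G e) = 2 then {e} else {})" by auto
  show ?thesis unfolding deg_in_def a b by auto
qed

lemma deg_in_empty[simp]: "deg_in G {} x = 0" by (simp add: deg_in_def)

lemma deg_in_zero:
  assumes "finite F" "\<forall>e\<in>F. x \<notin> ends G e"
  shows "deg_in G F x = 0"
  using assms unfolding deg_in_def by auto

lemma deg_in_pos:
  assumes "finite F" "e \<in> F" "x \<in> ends G e" "card (ends G e) = 1 \<or> card (ends G e) = 2"
  shows "deg_in G F x \<ge> 1"
proof (cases "card (ends G e) = 2")
  case True
  then have "e \<in> {e\<in>F. x \<in> ends G e \<and> card (ends G e) = 2}" using assms by auto
  then have "card {e\<in>F. x \<in> ends G e \<and> card (ends G e) = 2} \<ge> 1"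
    using assms(1) by (metis (no_types, lifting) One_nat_def Suc_leI card_gt_0_iff empty_iff finite_subset mem_Collect_eq subsetI)
  then show ?thesis unfolding deg_in_def by simp
next
  case False
  then have "ends G e = {x}" using assms by (metis card_1_singletonE singletonD)
  then have "e \<in> {e\<in>F. ends G e = {x}}" using assms by auto
  then have "card {e\<in>F. ends G e = {x}} \<ge> 1"
    using assms(1) by (metis (no_types, lifting) One_nat_def Suc_leI card_gt_0_iff empty_iff finite_subset mem_Collect_eq subsetI)
  then show ?thesis unfolding deg_in_def by simp
qed

lemma deg_in_insert:
  assumes "finite F" "e \<notin> F"
  shows "deg_in G (insert e F) x = deg_in G F x + deg_in G {e} x"
  using deg_in_union[of F "{e}" G x] assms by simp

lemma handshake:
  assumes "finite F" "finite V" "\<forall>e\<in>F. ends G e \<subseteq> V \<and> (card (ends G e) = 1 \<or> card (ends G e) = 2)"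
  shows "(\<Sum>x\<in>V. deg_in G F x) = 2 * card F"
  using assms(1,3)
proof (induction F rule: finite_induct)
  case empty then show ?case by simp
next
  case (insert e F)
  have "(\<Sum>x\<in>V. deg_in G (insert e F) x) = (\<Sum>x\<in>V. deg_in G F x) + (\<Sum>x\<in>V. deg_in G {e} x)"
    using insert deg_in_insert[of F e G] by (simp add: sum.distrib)
  moreover have "(\<Sum>x\<in>V. deg_in G {e} x) = 2"
  proof -
    have sub: "ends G e \<subseteq> V" and c: "card (ends G e) = 1 \<or> card (ends G e) = 2" using insert by auto
    show ?thesis
    proof (cases "card (ends G e) = 1")
      case True
      then obtain a where a: "ends G e = {a}" by (metis card_1_singletonE)
      have "(\<Sum>x\<in>V. deg_in G {e} x) = (\<Sum>x\<in>V. if x = a then 2 else 0)"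
        by (rule sum.cong) (auto simp: deg_in_single a)
      also have "\<dots> = 2" using sub a assms(2) by (simp add: sum.delta)
      finally show ?thesis .
    next
      case False
      then have c2: "card (ends G e) = 2" using c by auto
      then obtain a b where ab: "a \<noteq> b" "ends G e = {a,b}" by (metis card_2_iff)
      have "(\<Sum>x\<in>V. deg_in G {e} x) = (\<Sum>x\<in>V. (if x = a then 1 else 0) + (if x = b then 1 else 0))"
        by (rule sum.cong) (use ab c2 in \<open>auto simp: deg_in_single\<close>)
      also have "\<dots> = 2" using sub ab assms(2) by (simp add: sum.distrib sum.delta)
      finally show ?thesis .
    qed
  qed
  ultimately show ?case using insert by simp
qed



lemma circle_sub: "circle G Z \<Longrightarrow> is_sub G Z" by (simp add: circle_def)

lemma circle_fin:
  assumes "sgraph_wf G" "circle G Z" shows "finite (fst Z)" "finite (snd Z)"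
  using assms by (auto simp: circle_def is_sub_def sgraph_wf_def intro: finite_subset)

lemma circle_edges: "circle G Z \<Longrightarrow> snd Z \<subseteq> edges G"
  by (auto simp: circle_def is_sub_def)

lemma circle_ends: "circle G Z \<Longrightarrow> e \<in> snd Z \<Longrightarrow> ends G e \<subseteq> fst Z"
  by (auto simp: circle_def is_sub_def)

lemma circle_deg: "circle G Z \<Longrightarrow> x \<in> fst Z \<Longrightarrow> deg_in G (snd Z) x = 2"
  by (auto simp: circle_def)

lemma circle_deg_out:
  assumes "sgraph_wf G" "circle G Z" "x \<notin> fst Z" shows "deg_in G (snd Z) x = 0"
  using assms circle_ends[OF assms(2)] circle_fin[OF assms(1,2)] by (intro deg_in_zero) auto

lemma circle_even:
  assumes "sgraph_wf G" "circle G Z" shows "even (deg_in G (snd Z) x)"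
  using circle_deg_out[OF assms] circle_deg[OF assms(2)] by (cases "x \<in> fst Z") auto

lemma deg_nonzero_edge:
  assumes "deg_in G F x \<noteq> 0" shows "\<exists>e\<in>F. x \<in> ends G e"
proof (rule ccontr)
  assume "\<not> ?thesis"
  then have "{e\<in>F. ends G e = {x}} = {}" "{e\<in>F. x \<in> ends G e \<and> card (ends G e) = 2} = {}" by auto
  then have "deg_in G F x = 0" unfolding deg_in_def by (simp only: card.empty)
  then show False using assms by simp
qed

lemma circle_vertex_edge:
  assumes "circle G Z" "x \<in> fst Z" shows "\<exists>e\<in>snd Z. x \<in> ends G e"
  using deg_nonzero_edge circle_deg[OF assms] by force

lemma circle_vertices:
  assumes "circle G Z" shows "fst Z = \<Union>(ends G ` snd Z)"
  using circle_vertex_edge[OF assms] circle_ends[OF assms] by blast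

lemma circle_nonempty:
  assumes "circle G Z" shows "fst Z \<noteq> {}" "snd Z \<noteq> {}"
  using assms circle_vertex_edge[OF assms] by (auto simp: circle_def connected_sub_def)

lemma wf_edge_card:
  "sgraph_wf G \<Longrightarrow> e \<in> edges G \<Longrightarrow> card (ends G e) = 1 \<or> card (ends G e) = 2"
  by (rule wf_ends(2))

lemma deg_diff:
  assumes "finite B" "A \<subseteq> B" shows "deg_in G B x = deg_in G A x + deg_in G (B - A) x"
proof -
  have "B = A \<union> (B - A)" using assms by auto
  then show ?thesis using deg_in_union[of A "B - A" G x] assms by (metis Diff_disjoint finite_Diff finite_subset)
qed

lemma circle_subset:
  assumes wf: "sgraph_wf G" and Z: "circle G Z" and D: "circle G D" and sub: "snd Z \<subseteq> snd D"
  shows "Z = D"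
proof -
  have finD: "finite (snd D)" using circle_fin[OF wf D] by simp
  have V1: "fst Z \<subseteq> fst D" using circle_vertices[OF Z] circle_vertices[OF D] sub by blast
  have loc: "e \<in> snd Z" if "x \<in> fst Z" "e \<in> snd D" "x \<in> ends G e" for x e
  proof (rule ccontr)
    assume "e \<notin> snd Z"
    have "deg_in G (snd D) x = deg_in G (snd Z) x + deg_in G (snd D - snd Z) x"
      using deg_diff[OF finD sub] .
    moreover have "deg_in G (snd D) x = 2" using circle_deg[OF D] V1 that by auto
    moreover have "deg_in G (snd Z) x = 2" using circle_deg[OF Z] that by auto
    moreover have "deg_in G (snd D - snd Z) x \<ge> 1"
      using deg_in_pos[of "snd D - snd Z" e x G] finD that \<open>e \<notin> snd Z\<close>
        wf_edge_card[OF wf] circle_edges[OF D] by auto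
    ultimately show False by simp
  qed
  obtain z0 where z0: "z0 \<in> fst Z" using circle_nonempty[OF Z] by auto
  have reach: "(adj_in G (snd D))\<^sup>*\<^sup>* z0 y \<Longrightarrow> y \<in> fst Z" for y
  proof (induction rule: rtranclp_induct)
    case base then show ?case using z0 .
  next
    case (step y u)
    then obtain e where "e \<in> snd D" "y \<in> ends G e" "u \<in> ends G e" by (auto simp: adj_in_def)
    then have "e \<in> snd Z" using loc step by auto
    then show ?case using circle_ends[OF Z] \<open>u \<in> ends G e\<close> by auto
  qed
  have V2: "fst D \<subseteq> fst Z"
  proof
    fix y assume "y \<in> fst D"
    then have "(adj_in G (snd D))\<^sup>*\<^sup>* z0 y" using D z0 V1 by (auto simp: circle_def connected_sub_def)
    then show "y \<in> fst Z" using reach by auto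
  qed
  have E2: "snd D \<subseteq> snd Z"
  proof
    fix e assume e: "e \<in> snd D"
    then obtain x where "x \<in> ends G e" using circle_vertices[OF D] circle_vertex_edge[OF D]
      wf_edge_card[OF wf] circle_edges[OF D] by (metis card.empty equals0I zero_neq_numeral zero_neq_one subsetD)
    then show "e \<in> snd Z" using loc[of x e] e V2 circle_ends[OF D e] by auto
  qed
  show ?thesis using V1 V2 E2 sub by (simp add: prod_eq_iff)
qed



definition ispath :: "('v,'e) sgraph \<Rightarrow> 'e set \<Rightarrow> 'v list \<Rightarrow> 'e list \<Rightarrow> bool" where
  "ispath G F vs es \<longleftrightarrow> length vs = Suc (length es) \<and> distinct vs \<and> set es \<subseteq> F \<and>
     (\<forall>i<length es. ends G (es!i) = {vs!i, vs!Suc i})"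

lemma adj_symp: "symp (adj_in G F)" by (auto simp: symp_def adj_in_def)

lemma adj_rsym: "(adj_in G F)\<^sup>*\<^sup>* x y \<Longrightarrow> (adj_in G F)\<^sup>*\<^sup>* y x"
  by (rule sympD[OF symp_rtranclp[OF adj_symp]])

lemma adj_mono: "(adj_in G F)\<^sup>*\<^sup>* x y \<Longrightarrow> F \<subseteq> F' \<Longrightarrow> (adj_in G F')\<^sup>*\<^sup>* x y"
proof -
  assume a: "(adj_in G F)\<^sup>*\<^sup>* x y" "F \<subseteq> F'"
  have "adj_in G F \<le> adj_in G F'" using a(2) by (auto simp: adj_in_def le_fun_def)
  then show ?thesis using a(1) rtranclp_mono by (metis predicate2D)
qed

lemma two_elem: 
  assumes "card A = 2" "a \<in> A" "b \<in> A" "a \<noteq> b" shows "A = {a,b}"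
proof -
  obtain x y where "x \<noteq> y" "A = {x,y}" using assms(1) unfolding card_2_iff by blast
  then show ?thesis using assms(2-4) by fastforce
qed

lemma ispath_len: "ispath G F vs es \<Longrightarrow> length vs = Suc (length es)" by (simp add: ispath_def)
lemma ispath_dist: "ispath G F vs es \<Longrightarrow> distinct vs" by (simp add: ispath_def)
lemma ispath_set: "ispath G F vs es \<Longrightarrow> set es \<subseteq> F" by (simp add: ispath_def)
lemma ispath_ends: "ispath G F vs es \<Longrightarrow> i < length es \<Longrightarrow> ends G (es!i) = {vs!i, vs!Suc i}"
  by (simp add: ispath_def)

lemma ispath_neq: "ispath G F vs es \<Longrightarrow> i < length es \<Longrightarrow> vs!i \<noteq> vs!Suc i"
  by (simp add: ispath_def nth_eq_iff_index_eq)

lemma ispath_card2: "ispath G F vs es \<Longrightarrow> i < length es \<Longrightarrow> card (ends G (es!i)) = 2"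
  using ispath_neq ispath_ends by fastforce

lemma ispath_at: 
  assumes "ispath G F vs es" "i < length es" 
  shows "x \<in> ends G (es!i) \<longleftrightarrow> x = vs!i \<or> x = vs!Suc i"
  using ispath_ends[OF assms] by auto

lemma ispath_edge_inj:
  assumes p: "ispath G F vs es" and "i < length es" "j < length es" "es!i = es!j"
  shows "i = j"
proof -
  have "{vs!i, vs!Suc i} = {vs!j, vs!Suc j}" using ispath_ends[OF p] assms by metis
  moreover have "length vs = Suc (length es)" "distinct vs" using p by (auto simp: ispath_def)
  ultimately show ?thesis using assms by (auto simp: doubleton_eq_iff nth_eq_iff_index_eq)
qed

lemma ispath_distinct_es: "ispath G F vs es \<Longrightarrow> distinct es"
  using ispath_edge_inj by (metis distinct_conv_nth)

lemma ispath_deg: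
  assumes p: "ispath G F vs es"
  shows "deg_in G (set es) x = card {i. i < length es \<and> (x = vs!i \<or> x = vs!Suc i)}"
proof -
  have a: "{e\<in>set es. ends G e = {x}} = {}"
  proof -
    { fix i assume "i<length es" "ends G (es!i) = {x}"
      then have False using ispath_card2[OF p, of i] by simp }
    then show ?thesis by (auto simp: in_set_conv_nth)
  qed
  have b: "{e\<in>set es. x \<in> ends G e \<and> card (ends G e) = 2} = (\<lambda>i. es!i) ` {i. i < length es \<and> (x = vs!i \<or> x = vs!Suc i)}"
    using ispath_card2[OF p] ispath_at[OF p] by (auto simp: in_set_conv_nth)
  have "inj_on (\<lambda>i. es!i) {i. i < length es \<and> (x = vs!i \<or> x = vs!Suc i)}"
    using ispath_edge_inj[OF p] by (auto simp: inj_on_def)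
  then show ?thesis unfolding deg_in_def a b by (simp add: card_image)
qed

lemma ispath_deg_vs:
  assumes p: "ispath G F vs es" and j: "j \<le> length es"
  shows "deg_in G (set es) (vs!j) = card {i. i < length es \<and> (i = j \<or> Suc i = j)}"
proof -
  have "{i. i < length es \<and> (vs!j = vs!i \<or> vs!j = vs!Suc i)} = {i. i < length es \<and> (i = j \<or> Suc i = j)}"
    using p j by (auto simp: ispath_def nth_eq_iff_index_eq)
  then show ?thesis using ispath_deg[OF p] by simp
qed

lemma ispath_deg_out:
  assumes p: "ispath G F vs es" and "x \<notin> set vs"
  shows "deg_in G (set es) x = 0"
proof -
  have "{i. i < length es \<and> (x = vs!i \<or> x = vs!Suc i)} = {}"
    using assms by (auto simp: ispath_def)
  then show ?thesis using ispath_deg[OF p] by simp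
qed

lemma ispath_deg_inner:
  assumes p: "ispath G F vs es" and "0 < j" "j < length es"
  shows "deg_in G (set es) (vs!j) = 2"
proof -
  have "{i. i < length es \<and> (i = j \<or> Suc i = j)} = {j - 1, j}" using assms by auto
  then show ?thesis using ispath_deg_vs[OF p] assms by simp
qed

lemma ispath_deg_first:
  assumes p: "ispath G F vs es" and "0 < length es"
  shows "deg_in G (set es) (vs!0) = 1"
proof -
  have "{i. i < length es \<and> (i = 0 \<or> Suc i = 0)} = {0}" using assms by auto
  then show ?thesis using ispath_deg_vs[OF p] assms by simp
qed

lemma ispath_deg_last:
  assumes p: "ispath G F vs es" and "0 < length es"
  shows "deg_in G (set es) (vs!length es) = 1"
proof -
  have "{i. i < length es \<and> (i = length es \<or> Suc i = length es)} = {length es - 1}" using assms by auto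
  then show ?thesis using ispath_deg_vs[OF p] assms by simp
qed

lemma ispath_take:
  assumes p: "ispath G F vs es" and k: "k \<le> length es"
  shows "ispath G F (take (Suc k) vs) (take k es)"
  using p k unfolding ispath_def by (auto dest: in_set_takeD)

lemma ispath_drop:
  assumes p: "ispath G F vs es" and k: "k \<le> length es"
  shows "ispath G F (drop k vs) (drop k es)"
  using p k unfolding ispath_def by (auto dest: in_set_dropD simp: add.commute)

lemma ispath_cons:
  assumes p: "ispath G F vs es" and "z \<notin> set vs" "ends G f = {z, vs!0}" "f \<in> F"
  shows "ispath G F (z#vs) (f#es)"
  using assms unfolding ispath_def by (auto simp: nth_Cons split: nat.split)

lemma ispath_vs_ends:
  assumes p: "ispath G F vs es" "v \<in> set vs" "0 < length es"
  shows "\<exists>e\<in>set es. v \<in> ends G e"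
proof -
  obtain j where j: "j < length vs" "vs!j = v" using assms by (auto simp: in_set_conv_nth)
  show ?thesis
  proof (cases "j < length es")
    case True then show ?thesis using ispath_ends[OF p(1) True] j by (auto intro!: bexI[of _ "es!j"])
  next
    case False then have "j = Suc (length es - 1)" using j ispath_len[OF p(1)] assms(3) by auto
    then show ?thesis using ispath_ends[OF p(1), of "length es - 1"] j assms(3)
      by (auto intro!: bexI[of _ "es!(length es - 1)"])
  qed
qed

lemma walk_to_path:
  assumes "(adj_in G F)\<^sup>*\<^sup>* a b" and cards: "\<forall>e\<in>F. card (ends G e) = 1 \<or> card (ends G e) = 2"
  shows "\<exists>vs es. ispath G F vs es \<and> vs!0 = a \<and> vs!length es = b"
  using assms(1)
proof (induction rule: converse_rtranclp_induct)
  case base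
  show ?case by (rule exI[of _ "[b]"], rule exI[of _ "[]"]) (simp add: ispath_def)
next
  case (step a a')
  then obtain vs es where p: "ispath G F vs es" "vs!0 = a'" "vs!length es = b" by blast
  obtain e where e: "e \<in> F" "a \<in> ends G e" "a' \<in> ends G e" using step by (auto simp: adj_in_def)
  show ?case
  proof (cases "a \<in> set vs")
    case True
    then obtain k where k: "k < length vs" "vs!k = a" by (auto simp: in_set_conv_nth)
    have kl: "k \<le> length es" using k ispath_len[OF p(1)] by simp
    show ?thesis using ispath_drop[OF p(1) kl] k kl p ispath_len[OF p(1)]
      by (intro exI[of _ "drop k vs"] exI[of _ "drop k es"]) auto
  next
    case False
    then have "a \<noteq> a'" using p ispath_len[OF p(1)] by (metis nth_mem zero_less_Suc)
    then have "ends G e = {a, a'}" using e cards two_elem by (metis card_1_singletonE singletonD)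
    then have "ispath G F (a#vs) (e#es)" using ispath_cons[OF p(1) False] e p by auto
    then show ?thesis using p by (intro exI[of _ "a#vs"] exI[of _ "e#es"]) auto
  qed
qed

lemma ispath_reach:
  assumes p: "ispath G F vs es" and j: "j \<le> length es"
  shows "(adj_in G (set es))\<^sup>*\<^sup>* (vs!0) (vs!j)"
  using j
proof (induction j)
  case 0 then show ?case by simp
next
  case (Suc j)
  then have "adj_in G (set es) (vs!j) (vs!Suc j)" using ispath_ends[OF p, of j]
    by (auto simp: adj_in_def intro!: bexI[of _ "es!j"])
  then show ?case using Suc by auto
qed

lemma loop_circle:
  assumes "e \<in> edges G" "ends G e = {x}" "x \<in> verts G"
  shows "circle G ({x}, {e})"
  using assms unfolding circle_def is_sub_def connected_sub_def by (auto simp: deg_in_single)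

lemma path_close_circle:
  assumes wf: "sgraph_wf G" and p: "ispath G (edges G) vs es" and n: "0 < length es"
    and e: "e \<in> edges G" "e \<notin> set es" "ends G e = {vs!0, vs!length es}"
  shows "circle G (set vs, insert e (set es))"
proof -
  have len: "length vs = Suc (length es)" using ispath_len[OF p] .
  have dist: "distinct vs" using ispath_dist[OF p] .
  have ne: "vs!0 \<noteq> vs!length es" using dist len n by (simp add: nth_eq_iff_index_eq)
  have sube: "set es \<subseteq> edges G" using ispath_set[OF p] .
  have vsV: "set vs \<subseteq> verts G"
  proof
    fix x assume "x \<in> set vs"
    then obtain f where "f \<in> set es" "x \<in> ends G f" using ispath_vs_ends[OF p _ n] by blast
    then show "x \<in> verts G" using sube wf_ends(1)[OF wf] by blast
  qed
  have inv: "\<forall>i<length es. vs!i \<in> set vs \<and> vs!Suc i \<in> set vs" using len by auto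
  have inv2: "vs!0 \<in> set vs" "vs!length es \<in> set vs" using len by auto
  have issub: "is_sub G (set vs, insert e (set es))"
    unfolding is_sub_def
  proof (intro conjI ballI)
    fix f assume "f \<in> snd (set vs, insert e (set es))"
    then have "f = e \<or> (\<exists>i<length es. f = es!i)" by (auto simp: in_set_conv_nth)
    then show "ends G f \<subseteq> fst (set vs, insert e (set es))"
    proof
      assume "f = e" then show ?thesis using e(3) inv2 by simp
    next
      assume "\<exists>i<length es. f = es!i"
      then obtain i where "i < length es" "f = es!i" by blast
      then show ?thesis using inv ispath_ends[OF p] by simp
    qed
  qed (use vsV sube e in auto)
  have de: "deg_in G {e} x = (if x = vs!0 \<or> x = vs!length es then 1 else 0)" for x
    using e ne by (auto simp: deg_in_single)
  have deg: "deg_in G (insert e (set es)) x = 2" if xin: "x \<in> set vs" for x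
  proof -
    obtain j where j: "j < length vs" "vs!j = x" using xin by (auto simp: in_set_conv_nth)
    have dd: "deg_in G (insert e (set es)) x = deg_in G (set es) x + deg_in G {e} x"
      using deg_in_insert[of "set es" e G x] e by simp
    show ?thesis
    proof (cases "j = 0")
      case True then show ?thesis using dd de ispath_deg_first[OF p n] j by auto
    next
      case False
      show ?thesis
      proof (cases "j = length es")
        case True then show ?thesis using dd de ispath_deg_last[OF p n] j by auto
      next
        case False2: False
        have "x \<noteq> vs!0" "x \<noteq> vs!length es" using j dist len False False2 by (auto simp: nth_eq_iff_index_eq)
        then show ?thesis using dd de ispath_deg_inner[OF p, of j] j False False2 len by auto
      qed
    qed
  qed
  have conn: "connected_sub G (set vs, insert e (set es))"
    unfolding connected_sub_def
  proof (intro conjI ballI)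
    show "fst (set vs, insert e (set es)) \<noteq> {}" using len by auto
    fix x y assume "x \<in> fst (set vs, insert e (set es))" "y \<in> fst (set vs, insert e (set es))"
    then obtain i j where ij: "i \<le> length es" "vs!i = x" "j \<le> length es" "vs!j = y"
      using len by (auto simp: in_set_conv_nth less_Suc_eq_le)
    have m: "(adj_in G (set es))\<^sup>*\<^sup>* a b \<Longrightarrow> (adj_in G (insert e (set es)))\<^sup>*\<^sup>* a b" for a b
      by (erule adj_mono) auto
    have r1: "(adj_in G (insert e (set es)))\<^sup>*\<^sup>* (vs!0) x" using m ispath_reach[OF p ij(1)] ij by simp
    have r2: "(adj_in G (insert e (set es)))\<^sup>*\<^sup>* (vs!0) y" using m ispath_reach[OF p ij(3)] ij by simp
    show "(adj_in G (snd (set vs, insert e (set es))))\<^sup>*\<^sup>* x y"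
      using rtranclp_trans[OF adj_rsym[OF r1] r2] by simp
  qed
  have deg': "\<forall>x\<in>fst (set vs, insert e (set es)). deg_in G (snd (set vs, insert e (set es))) x = 2"
    using deg by simp
  show ?thesis unfolding circle_def using issub conn deg' by blast
qed



lemma ispath_mono: "ispath G F vs es \<Longrightarrow> F \<subseteq> F' \<Longrightarrow> ispath G F' vs es"
  by (auto simp: ispath_def)

lemma ispath_vs_sub:
  assumes wf: "sgraph_wf G" and p: "ispath G F vs es" and F: "F \<subseteq> edges G" and n: "0 < length es"
  shows "set vs \<subseteq> verts G"
proof
  fix x assume "x \<in> set vs"
  then obtain f where "f \<in> set es" "x \<in> ends G f" using ispath_vs_ends[OF p _ n] by blast
  then show "x \<in> verts G" using ispath_set[OF p] F wf_ends(1)[OF wf] by blast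
qed

lemma links_at_two:
  assumes fin: "finite X" and d: "card {e\<in>X. x \<in> ends G e \<and> card (ends G e) = 2} \<ge> 2" and f: "f \<in> X"
  shows "\<exists>e'\<in>X. e' \<noteq> f \<and> x \<in> ends G e' \<and> card (ends G e') = 2"
proof (rule ccontr)
  assume "\<not> ?thesis"
  then have "{e\<in>X. x \<in> ends G e \<and> card (ends G e) = 2} \<subseteq> {f}" by auto
  then have "card {e\<in>X. x \<in> ends G e \<and> card (ends G e) = 2} \<le> 1"
    using card_mono[of "{f}"] by fastforce
  then show False using d by simp
qed

lemma even_has_circle:
  assumes wf: "sgraph_wf G" and X: "X \<subseteq> edges G" "X \<noteq> {}" and ev: "\<forall>x. even (deg_in G X x)"
  shows "\<exists>Z. circle G Z \<and> snd Z \<subseteq> X"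
proof (cases "\<exists>e\<in>X. \<exists>x. ends G e = {x}")
  case True
  then obtain e x where e: "e \<in> X" "ends G e = {x}" by blast
  then have "x \<in> verts G" using wf_ends(1)[OF wf] X by blast
  then show ?thesis using loop_circle[of e G x] e X by (intro exI[of _ "({x},{e})"]) auto
next
  case False
  have fin: "finite X" using X wf_fin[OF wf] finite_subset by blast
  have link: "card (ends G e) = 2" if "e \<in> X" for e
  proof -
    have "card (ends G e) = 1 \<or> card (ends G e) = 2" using wf_ends(2)[OF wf, of e] that X by blast
    moreover have "card (ends G e) \<noteq> 1"
    proof
      assume "card (ends G e) = 1"
      then obtain y where "ends G e = {y}" by (rule card_1_singletonE)
      then show False using False that by blast
    qed
    ultimately show ?thesis by blast
  qed
  define P where "P n \<longleftrightarrow> (\<exists>vs es. ispath G X vs es \<and> 0 < length es \<and> length es = n)" for n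
  obtain e0 where e0: "e0 \<in> X" using X by blast
  obtain a b where ab: "a \<noteq> b" "ends G e0 = {a,b}" using link[OF e0] unfolding card_2_iff by blast
  have p1: "ispath G X [a,b] [e0]" using ab e0 by (auto simp: ispath_def)
  have P1: "P 1" unfolding P_def by (rule exI[of _ "[a,b]"], rule exI[of _ "[e0]"]) (simp add: p1)
  have bound: "\<forall>n. P n \<longrightarrow> n \<le> card (verts G)"
  proof (intro allI impI)
    fix n assume "P n"
    then obtain vs es where p: "ispath G X vs es" "0 < length es" "length es = n" unfolding P_def by blast
    have "set vs \<subseteq> verts G" using ispath_vs_sub[OF wf p(1) X(1) p(2)] .
    then have "card (set vs) \<le> card (verts G)" using wf_fin[OF wf] card_mono by blast
    moreover have "card (set vs) = length vs" using ispath_dist[OF p(1)] distinct_card by blast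
    ultimately show "n \<le> card (verts G)" using ispath_len[OF p(1)] p by simp
  qed
  obtain n where n: "P n" "\<forall>m. P m \<longrightarrow> m \<le> n" using Nat.ex_has_greatest_nat[OF P1 bound] by blast
  obtain vs es where p: "ispath G X vs es" "0 < length es" "length es = n" using n(1) unfolding P_def by blast
  define x where "x = vs!0"
  have len: "length vs = Suc (length es)" using ispath_len[OF p(1)] .
  have dist: "distinct vs" using ispath_dist[OF p(1)] .
  have es0: "es!0 \<in> X" using ispath_set[OF p(1)] p(2) by auto
  have xe0: "x \<in> ends G (es!0)" using ispath_ends[OF p(1) p(2)] x_def by simp
  have dpos: "deg_in G X x \<ge> 1" using deg_in_pos[OF fin es0 xe0] link[OF es0] by simp
  have d2: "deg_in G X x \<ge> 2" using dpos ev[rule_format, of x] by presburger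
  have noloop: "{e\<in>X. ends G e = {x}} = {}" using False by blast
  have "card {e\<in>X. x \<in> ends G e \<and> card (ends G e) = 2} \<ge> 2"
    using d2 unfolding deg_in_def noloop by simp
  then have "\<exists>e'\<in>X. e' \<noteq> es!0 \<and> x \<in> ends G e' \<and> card (ends G e') = 2"
    by (rule links_at_two[OF fin _ es0])
  then obtain e' where e': "e' \<in> X" "e' \<noteq> es!0" "x \<in> ends G e'" "card (ends G e') = 2"
    by blast
  obtain z where z: "z \<noteq> x" "ends G e' = {x, z}"
  proof -
    obtain c d where cd: "c \<noteq> d" "ends G e' = {c,d}" using e'(4) unfolding card_2_iff by blast
    show ?thesis
    proof (cases "x = c")
      case True then show ?thesis using that[of d] cd by auto
    next
      case False then have "x = d" using cd e'(3) by auto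
      then show ?thesis using that[of c] cd by auto
    qed
  qed
  have e'ne: "e' \<notin> set es"
  proof
    assume "e' \<in> set es"
    then obtain j where j: "j < length es" "es!j = e'" by (auto simp: in_set_conv_nth)
    have "x = vs!j \<or> x = vs!Suc j" using ispath_at[OF p(1) j(1)] e'(3) j by simp
    then have "j = 0" using dist len j x_def by (auto simp: nth_eq_iff_index_eq)
    then show False using j e'(2) by simp
  qed
  show ?thesis
  proof (cases "z \<in> set vs")
    case False
    have pz: "ispath G X (z#vs) (e'#es)" using ispath_cons[OF p(1) False] z e' x_def by (simp add: insert_commute)
    have "P (Suc n)" unfolding P_def by (rule exI[of _ "z#vs"], rule exI[of _ "e'#es"]) (simp add: pz p(3))
    then show ?thesis using n(2)[rule_format, of "Suc n"] by simp
  next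
    case True
    then obtain i where i: "i < length vs" "vs!i = z" by (auto simp: in_set_conv_nth)
    have i0: "i \<noteq> 0"
    proof
      assume "i = 0" then show False using i z x_def by simp
    qed
    have il: "i \<le> length es" using i len by simp
    have p': "ispath G X (take (Suc i) vs) (take i es)" using ispath_take[OF p(1) il] .
    have p'': "ispath G (edges G) (take (Suc i) vs) (take i es)" using ispath_mono[OF p' X(1)] .
    have l': "length (take i es) = i" using il by simp
    have "e' \<notin> set (take i es)" using e'ne by (meson in_set_takeD)
    moreover have "ends G e' = {take (Suc i) vs ! 0, take (Suc i) vs ! length (take i es)}"
      using z x_def i l' by (simp add: insert_commute)
    moreover have "0 < length (take i es)" using l' i0 by simp
    moreover have "e' \<in> edges G" using e' X by blast
    ultimately have cl: "circle G (set (take (Suc i) vs), insert e' (set (take i es)))"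
      using path_close_circle[OF wf p''] by blast
    moreover have "insert e' (set (take i es)) \<subseteq> X" using e' ispath_set[OF p'] by auto
    ultimately show ?thesis by (intro exI[of _ "(set (take (Suc i) vs), insert e' (set (take i es)))"]) auto
  qed
qed

definition nneg :: "('v,'e) sgraph \<Rightarrow> 'e set \<Rightarrow> nat" where
  "nneg G F = card {e\<in>F. neg G e}"

lemma nneg_union:
  assumes "finite A" "finite B" "A \<inter> B = {}"
  shows "nneg G (A \<union> B) = nneg G A + nneg G B"
proof -
  have "{e\<in>A\<union>B. neg G e} = {e\<in>A. neg G e} \<union> {e\<in>B. neg G e}" by auto
  then show ?thesis unfolding nneg_def using assms by (simp only:) (rule card_Un_disjoint, auto)
qed

lemma negative_nneg: "negative G Z \<longleftrightarrow> odd (nneg G (snd Z))"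
  by (simp add: negative_def nneg_def)

lemma even_neg_has_neg_circle:
  assumes wf: "sgraph_wf G" and X: "X \<subseteq> edges G" and ev: "\<forall>x. even (deg_in G X x)"
    and ng: "odd (nneg G X)"
  shows "\<exists>Z. circle G Z \<and> negative G Z \<and> snd Z \<subseteq> X"
  using X ev ng
proof (induction "card X" arbitrary: X rule: less_induct)
  case less
  have fin: "finite X" using less.prems wf_fin[OF wf] finite_subset by blast
  have "X \<noteq> {}" using less.prems by (auto simp: nneg_def)
  then obtain Z where Z: "circle G Z" "snd Z \<subseteq> X" using even_has_circle[OF wf less.prems(1)] less.prems by blast
  show ?case
  proof (cases "negative G Z")
    case True then show ?thesis using Z by blast
  next
    case False
    have finZ: "finite (snd Z)" using circle_fin[OF wf Z(1)] by simp
    define Y where "Y = X - snd Z"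
    have XY: "X = snd Z \<union> Y" "snd Z \<inter> Y = {}" using Z Y_def by auto
    have "Y \<subset> X" using Z circle_nonempty[OF Z(1)] unfolding Y_def by blast
    then have "card Y < card X" using psubset_card_mono[OF fin] by blast
    moreover have "Y \<subseteq> edges G" using less.prems Y_def by auto
    moreover have "\<forall>x. even (deg_in G Y x)"
    proof
      fix x
      have "deg_in G X x = deg_in G (snd Z) x + deg_in G Y x"
        using XY deg_in_union[OF finZ _ XY(2)] fin Y_def by auto
      moreover have "even (deg_in G X x)" using less.prems(2) by blast
      ultimately have "even (deg_in G (snd Z) x + deg_in G Y x)" by simp
      then show "even (deg_in G Y x)" using circle_even[OF wf Z(1), of x] by simp
    qed
    moreover have "odd (nneg G Y)"
    proof -
      have "nneg G X = nneg G (snd Z) + nneg G Y"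
        using XY nneg_union[OF finZ _ XY(2)] fin Y_def by auto
      then show ?thesis using less.prems(3) False negative_nneg[of G Z] by auto
    qed
    ultimately obtain W where "circle G W" "negative G W" "snd W \<subseteq> Y" using less.hyps by blast
    then show ?thesis using Y_def by blast
  qed
qed



lemma deg_single_link:
  assumes "ends G e = {b,c}" "b \<noteq> c"
  shows "deg_in G {e} x = (if x = b \<or> x = c then 1 else 0)"
  using assms by (auto simp: deg_in_single)

lemma walk_tjoin:
  assumes wf: "sgraph_wf G" and F: "F \<subseteq> edges G" and w: "(adj_in G F)\<^sup>*\<^sup>* a b"
  shows "\<exists>A\<subseteq>F. \<forall>x. odd (deg_in G A x) \<longleftrightarrow> (a \<noteq> b \<and> (x = a \<or> x = b))"
  using w
proof (induction rule: rtranclp_induct)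
  case base then show ?case by (intro exI[of _ "{}"]) simp
next
  case (step b c)
  then obtain A where A: "A \<subseteq> F" "\<forall>x. odd (deg_in G A x) \<longleftrightarrow> (a \<noteq> b \<and> (x = a \<or> x = b))" by blast
  show ?case
  proof (cases "b = c")
    case True then show ?thesis using A by blast
  next
    case False
    obtain e where e: "e \<in> F" "b \<in> ends G e" "c \<in> ends G e" using step(2) by (auto simp: adj_in_def)
    have "card (ends G e) = 1 \<or> card (ends G e) = 2" using wf_ends(2)[OF wf] e F by blast
    moreover have "card (ends G e) \<noteq> 1"
    proof
      assume "card (ends G e) = 1"
      then obtain y where "ends G e = {y}" by (rule card_1_singletonE)
      then show False using e False by auto
    qed
    ultimately have "ends G e = {b,c}" using two_elem[of "ends G e" b c] e False by blast
    then have de: "deg_in G {e} x = (if x = b \<or> x = c then 1 else 0)" for x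
      using deg_single_link False by metis
    have finF: "finite F" using F wf_fin[OF wf] finite_subset by blast
    have finA: "finite A" using A(1) finF finite_subset by blast
    define A' where "A' = (if e \<in> A then A - {e} else insert e A)"
    have A'F: "A' \<subseteq> F" using A(1) e unfolding A'_def by auto
    have par: "odd (deg_in G A' x) \<longleftrightarrow> (odd (deg_in G A x) \<noteq> (x = b \<or> x = c))" for x
    proof (cases "e \<in> A")
      case True
      have "deg_in G A x = deg_in G (A - {e}) x + deg_in G {e} x"
        using deg_diff[OF finA, of "A - {e}" G x] True by (simp add: Diff_Diff_Int)
      then show ?thesis using True de[of x] unfolding A'_def by auto
    next
      case False
      have "deg_in G (insert e A) x = deg_in G A x + deg_in G {e} x"
        using deg_in_insert[OF finA False] .
      then show ?thesis using False de[of x] unfolding A'_def by auto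
    qed
    have "\<forall>x. odd (deg_in G A' x) \<longleftrightarrow> (a \<noteq> c \<and> (x = a \<or> x = c))"
    proof
      fix x show "odd (deg_in G A' x) \<longleftrightarrow> (a \<noteq> c \<and> (x = a \<or> x = c))"
        using par[of x] A(2)[rule_format, of x] False by auto
    qed
    then show ?thesis using A'F by blast
  qed
qed

lemma path_parity:
  assumes p: "ispath G F vs es" and n: "0 < length es"
  shows "odd (deg_in G (set es) x) \<longleftrightarrow> (x = vs!0 \<or> x = vs!length es)"
proof (cases "x \<in> set vs")
  case False
  have "vs!0 \<in> set vs" "vs!length es \<in> set vs" using ispath_len[OF p] by auto
  then show ?thesis using ispath_deg_out[OF p False] False by auto
next
  case True
  then obtain j where j: "j < length vs" "vs!j = x" by (auto simp: in_set_conv_nth)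
  have len: "length vs = Suc (length es)" using ispath_len[OF p] .
  have dist: "distinct vs" using ispath_dist[OF p] .
  show ?thesis
  proof (cases "j = 0")
    case True then show ?thesis using ispath_deg_first[OF p n] j by auto
  next
    case False
    show ?thesis
    proof (cases "j = length es")
      case True then show ?thesis using ispath_deg_last[OF p n] j by auto
    next
      case False2: False
      have "x \<noteq> vs!0" "x \<noteq> vs!length es" using j dist len False False2 by (auto simp: nth_eq_iff_index_eq)
      then show ?thesis using ispath_deg_inner[OF p, of j] j False False2 len by auto
    qed
  qed
qed

lemma theta:
  assumes wf: "sgraph_wf G" and D: "circle G D" and negD: "negative G D"
    and p: "ispath G (edges G) vs es" and n: "0 < length es"
    and w: "vs!0 \<in> fst D" and y: "vs!length es \<in> fst D"
    and disj: "set es \<inter> snd D = {}"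
    and inner: "\<forall>i. 0 < i \<and> i < length es \<longrightarrow> vs!i \<notin> fst D"
  shows "\<exists>Z. circle G Z \<and> negative G Z \<and> set es \<subseteq> snd Z \<and> snd Z \<subseteq> set es \<union> snd D"
proof -
  have len: "length vs = Suc (length es)" using ispath_len[OF p] .
  have dist: "distinct vs" using ispath_dist[OF p] .
  have wy: "vs!0 \<noteq> vs!length es" using dist len n by (simp add: nth_eq_iff_index_eq)
  have finD: "finite (snd D)" using circle_fin[OF wf D] by simp
  have finP: "finite (set es)" by simp
  have DE: "snd D \<subseteq> edges G" using circle_edges[OF D] .
  have PE: "set es \<subseteq> edges G" using ispath_set[OF p] .
  have reach: "(adj_in G (snd D))\<^sup>*\<^sup>* (vs!0) (vs!length es)"
    using D w y by (auto simp: circle_def connected_sub_def)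
  obtain A where A: "A \<subseteq> snd D"
    "\<forall>x. odd (deg_in G A x) \<longleftrightarrow> (vs!0 \<noteq> vs!length es \<and> (x = vs!0 \<or> x = vs!length es))"
    using walk_tjoin[OF wf DE reach] by (elim exE conjE) (rule that; assumption)
  have Apar: "odd (deg_in G A x) \<longleftrightarrow> (x = vs!0 \<or> x = vs!length es)" for x using A(2) wy by auto
  have Ppar: "odd (deg_in G (set es) x) \<longleftrightarrow> (x = vs!0 \<or> x = vs!length es)" for x
    using path_parity[OF p n] .
  have finA: "finite A" using A(1) finD finite_subset by blast
  have finDA: "finite (snd D - A)" using finD by simp
  have dPA: "set es \<inter> A = {}" "set es \<inter> (snd D - A) = {}" using disj A(1) by auto
  define X1 where "X1 = set es \<union> A"
  define X2 where "X2 = set es \<union> (snd D - A)"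
  have ev1: "\<forall>x. even (deg_in G X1 x)"
  proof
    fix x
    have "deg_in G X1 x = deg_in G (set es) x + deg_in G A x"
      unfolding X1_def using deg_in_union[OF finP finA dPA(1)] .
    then show "even (deg_in G X1 x)" using Apar[of x] Ppar[of x] by auto
  qed
  have ev2: "\<forall>x. even (deg_in G X2 x)"
  proof
    fix x
    have "deg_in G X2 x = deg_in G (set es) x + deg_in G (snd D - A) x"
      unfolding X2_def using deg_in_union[OF finP finDA dPA(2)] .
    moreover have "deg_in G (snd D) x = deg_in G A x + deg_in G (snd D - A) x"
      using deg_diff[OF finD A(1)] .
    moreover have "even (deg_in G (snd D) x)" using circle_even[OF wf D] .
    ultimately show "even (deg_in G X2 x)" using Apar[of x] Ppar[of x] by auto
  qed
  have nsum: "nneg G X1 + nneg G X2 = 2 * nneg G (set es) + nneg G (snd D)"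
  proof -
    have "nneg G X1 = nneg G (set es) + nneg G A" unfolding X1_def using nneg_union[OF finP finA dPA(1)] .
    moreover have "nneg G X2 = nneg G (set es) + nneg G (snd D - A)" unfolding X2_def using nneg_union[OF finP finDA dPA(2)] .
    moreover have "nneg G (snd D) = nneg G A + nneg G (snd D - A)"
    proof -
      have "snd D = A \<union> (snd D - A)" using A(1) by auto
      moreover have "A \<inter> (snd D - A) = {}" by blast
      ultimately show ?thesis using nneg_union[OF finA finDA, of G] by simp
    qed
    ultimately show ?thesis by simp
  qed
  have oddD: "odd (nneg G (snd D))" using negD negative_nneg by blast
  have w1: "odd (deg_in G A (vs!0))" using Apar by simp
  have nsub1: "\<not> snd D \<subseteq> X1"
  proof
    assume "snd D \<subseteq> X1"
    then have "snd D \<subseteq> A" using disj unfolding X1_def by blast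
    then have "A = snd D" using A(1) by blast
    then show False using w1 circle_even[OF wf D] by simp
  qed
  have nsub2: "\<not> snd D \<subseteq> X2"
  proof
    assume "snd D \<subseteq> X2"
    then have "A = {}" using disj A(1) unfolding X2_def by blast
    then show False using w1 by simp
  qed
  have "odd (nneg G X1 + nneg G X2)" using nsum oddD by simp
  then have "odd (nneg G X1) \<or> odd (nneg G X2)" by auto
  then obtain X where X: "X = X1 \<or> X = X2" "odd (nneg G X)" by blast
  have Xev: "\<forall>x. even (deg_in G X x)" using X ev1 ev2 by blast
  have XE: "X \<subseteq> edges G" using X PE DE A(1) unfolding X1_def X2_def by blast
  have nsub: "\<not> snd D \<subseteq> X" using X nsub1 nsub2 by blast
  have Xsub: "X \<subseteq> set es \<union> snd D" using X A(1) unfolding X1_def X2_def by blast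
  obtain Z where Z: "circle G Z" "negative G Z" "snd Z \<subseteq> X"
    using even_neg_has_neg_circle[OF wf XE Xev X(2)] by blast
  have hit: "\<exists>i<length es. es!i \<in> snd Z"
  proof (rule ccontr)
    assume "\<not> ?thesis"
    then have "snd Z \<inter> set es = {}" by (auto simp: in_set_conv_nth)
    then have "snd Z \<subseteq> snd D" using Z(3) Xsub by blast
    then have "Z = D" using circle_subset[OF wf Z(1) D] by blast
    then show False using nsub Z(3) by blast
  qed
  have key: "es!(k-1) \<in> snd Z \<longleftrightarrow> es!k \<in> snd Z" if k: "0 < k" "k < length es" for k
  proof -
    define u where "u = vs!k"
    have uD: "u \<notin> fst D" using inner k u_def by blast
    have atu: "e \<in> {es!(k-1), es!k}" if "e \<in> X" "u \<in> ends G e" for e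
    proof -
      have "e \<in> set es \<or> e \<in> snd D" using that Xsub by blast
      moreover have "e \<notin> snd D" using circle_ends[OF D] that uD by blast
      ultimately obtain i where i: "i < length es" "es!i = e" by (auto simp: in_set_conv_nth)
      then have "u = vs!i \<or> u = vs!Suc i" using ispath_at[OF p i(1)] that by simp
      then have "i = k \<or> Suc i = k" using dist len i k u_def by (auto simp: nth_eq_iff_index_eq)
      then show ?thesis using i by auto
    qed
    have lk: "card (ends G (es!(k-1))) = 2" "card (ends G (es!k)) = 2"
      using ispath_card2[OF p] k by auto
    have uin: "u \<in> ends G (es!(k-1))" "u \<in> ends G (es!k)"
      using ispath_ends[OF p, of "k-1"] ispath_ends[OF p, of k] k u_def by auto
    have both: "es!(k-1) \<in> snd Z \<and> es!k \<in> snd Z" if one: "es!(k-1) \<in> snd Z \<or> es!k \<in> snd Z"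
    proof -
      have "u \<in> fst Z" using one uin circle_ends[OF Z(1)] by blast
      then have d2: "deg_in G (snd Z) u = 2" using circle_deg[OF Z(1)] by blast
      have noloop: "{e\<in>snd Z. ends G e = {u}} = {}"
      proof -
        { fix e assume "e \<in> snd Z" "ends G e = {u}"
          then have "e \<in> {es!(k-1), es!k}" using atu Z(3) by blast
          then have False using lk \<open>ends G e = {u}\<close> by auto }
        then show ?thesis by blast
      qed
      have c2: "card {e\<in>snd Z. u \<in> ends G e \<and> card (ends G e) = 2} = 2"
        using d2 unfolding deg_in_def noloop by simp
      have sub: "{e\<in>snd Z. u \<in> ends G e \<and> card (ends G e) = 2} \<subseteq> {es!(k-1), es!k} \<inter> snd Z"
        using atu Z(3) by blast
      show ?thesis
      proof (rule ccontr)
        assume "\<not> ?thesis"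
        then obtain f where "{es!(k-1), es!k} \<inter> snd Z \<subseteq> {f}" by blast
        then have "card ({es!(k-1), es!k} \<inter> snd Z) \<le> 1"
          using card_mono[of "{f}"] by fastforce
        moreover have "card {e\<in>snd Z. u \<in> ends G e \<and> card (ends G e) = 2} \<le> card ({es!(k-1), es!k} \<inter> snd Z)"
          using sub by (intro card_mono) auto
        ultimately show False using c2 by simp
      qed
    qed
    show ?thesis using both by blast
  qed
  have all: "es!j \<in> snd Z \<longleftrightarrow> es!0 \<in> snd Z" if "j < length es" for j
    using that
  proof (induction j)
    case 0 then show ?case by simp
  next
    case (Suc j) then show ?case using key[of "Suc j"] by simp
  qed
  have "set es \<subseteq> snd Z"
  proof -
    obtain i where "i < length es" "es!i \<in> snd Z" using hit by blast
    then have "es!0 \<in> snd Z" using all by blast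
    then show ?thesis using all by (auto simp: in_set_conv_nth)
  qed
  then show ?thesis using Z Xsub by blast
qed



lemma insep_sub: "inseparable G H \<Longrightarrow> is_sub G H" by (simp add: inseparable_def)
lemma insep_conn: "inseparable G H \<Longrightarrow> x \<in> fst H \<Longrightarrow> y \<in> fst H \<Longrightarrow> (adj_in G (snd H))\<^sup>*\<^sup>* x y"
  by (simp add: inseparable_def connected_sub_def)
lemma insep_nocut: "inseparable G H \<Longrightarrow> \<not> has_cutpoint G H" by (simp add: inseparable_def)

lemma insep_loop:
  assumes H: "inseparable G H" and l: "l \<in> snd H" "ends G l = {x}" and e: "e \<in> snd H"
  shows "e = l"
proof (rule ccontr)
  assume ne: "e \<noteq> l"
  have "has_cutpoint G H"
    unfolding has_cutpoint_def
    by (rule exI[of _ x], rule exI[of _ "{l}"], rule exI[of _ "snd H - {l}"]) (use l e ne in auto)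
  then show False using insep_nocut[OF H] by blast
qed

lemma three_in_two:
  assumes "card S = 1 \<or> card S = 2" "w \<in> S" "k \<in> S" "z \<in> S" "k \<noteq> w" "z \<noteq> w"
  shows "z = k"
proof (cases "card S = 1")
  case True
  then obtain a where "S = {a}" by (rule card_1_singletonE)
  then show ?thesis using assms by auto
next
  case False
  then have "S = {w,k}" using two_elem[of S w k] assms by auto
  then show ?thesis using assms by auto
qed

lemma rt_first_step:
  assumes "R\<^sup>*\<^sup>* x y" "x \<noteq> y" shows "\<exists>z. R x z"
  using assms by (induction rule: converse_rtranclp_induct) auto

lemma insep_edge_at:
  assumes H: "inseparable G H" "x \<in> fst H" "y \<in> fst H" "x \<noteq> y"
  shows "\<exists>e\<in>snd H. x \<in> ends G e"
proof -
  obtain z where "adj_in G (snd H) x z" using rt_first_step[OF insep_conn[OF H(1-3)] H(4)] by blast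
  then show ?thesis by (auto simp: adj_in_def)
qed

lemma two_conn:
  assumes wf: "sgraph_wf G" and H: "inseparable G H"
    and x: "x \<in> fst H" "x \<noteq> w" and y: "y \<in> fst H" "y \<noteq> w"
  shows "(adj_in G {e\<in>snd H. w \<notin> ends G e})\<^sup>*\<^sup>* x y"
proof (rule ccontr)
  assume nr: "\<not> ?thesis"
  define R where "R = adj_in G {e\<in>snd H. w \<notin> ends G e}"
  define K where "K = {z. R\<^sup>*\<^sup>* x z}"
  have yK: "y \<notin> K" using nr unfolding K_def R_def by simp
  have xy: "x \<noteq> y" using nr by auto
  have Kw: "k \<noteq> w" if "k \<in> K" for k
  proof -
    have "R\<^sup>*\<^sup>* x k" using that K_def by simp
    then show ?thesis
    proof (induction rule: rtranclp_induct)
      case base then show ?case using x by simp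
    next
      case (step a b) then show ?case unfolding R_def adj_in_def by auto
    qed
  qed
  have Kstep: "u \<in> K" if "k \<in> K" "e \<in> snd H" "w \<notin> ends G e" "k \<in> ends G e" "u \<in> ends G e" for k e u
  proof -
    have "R k u" unfolding R_def adj_in_def using that by blast
    then show ?thesis using that(1) unfolding K_def by simp
  qed
  have card: "card (ends G e) = 1 \<or> card (ends G e) = 2" if "e \<in> snd H" for e
    using wf_ends(2)[OF wf] insep_sub[OF H] that by (auto simp: is_sub_def)
  define F1 where "F1 = {e\<in>snd H. \<exists>k\<in>K. k \<in> ends G e}"
  define F2 where "F2 = snd H - F1"
  have xK: "x \<in> K" unfolding K_def by simp
  obtain ex where ex: "ex \<in> snd H" "x \<in> ends G ex" using insep_edge_at[OF H x(1) y(1) xy] by blast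
  obtain ey where ey: "ey \<in> snd H" "y \<in> ends G ey" using insep_edge_at[OF H y(1) x(1)] xy by metis
  have "ex \<in> F1" using ex xK unfolding F1_def by blast
  have "ey \<notin> F1"
  proof
    assume "ey \<in> F1"
    then obtain k where k: "k \<in> K" "k \<in> ends G ey" unfolding F1_def by blast
    show False
    proof (cases "w \<in> ends G ey")
      case False then show False using Kstep[OF k(1) ey(1) False k(2) ey(2)] yK by blast
    next
      case True
      have "y = k" using three_in_two[OF card[OF ey(1)] True k(2) ey(2) Kw[OF k(1)] y(2)] .
      then show False using k yK by simp
    qed
  qed
  then have "ey \<in> F2" using ey unfolding F2_def by blast
  have inter: "(\<Union>(ends G ` F1)) \<inter> (\<Union>(ends G ` F2)) \<subseteq> {w}"
  proof
    fix z assume "z \<in> (\<Union>(ends G ` F1)) \<inter> (\<Union>(ends G ` F2))"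
    then obtain e1 e2 where e1: "e1 \<in> F1" "z \<in> ends G e1" and e2: "e2 \<in> F2" "z \<in> ends G e2" by blast
    obtain k where k: "k \<in> K" "k \<in> ends G e1" "e1 \<in> snd H" using e1 unfolding F1_def by blast
    have zK: "z \<notin> K" using e2 unfolding F2_def F1_def by blast
    show "z \<in> {w}"
    proof (rule ccontr)
      assume "z \<notin> {w}"
      then have zw: "z \<noteq> w" by simp
      show False
      proof (cases "w \<in> ends G e1")
        case False then show False using Kstep[OF k(1) k(3) False k(2) e1(2)] zK by blast
      next
        case True
        have "z = k" using three_in_two[OF card[OF k(3)] True k(2) e1(2) Kw[OF k(1)] zw] .
        then show False using k zK by simp
      qed
    qed
  qed
  have "has_cutpoint G H"
    unfolding has_cutpoint_def
    by (rule exI[of _ w], rule exI[of _ F1], rule exI[of _ F2])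
       (use inter \<open>ex \<in> F1\<close> \<open>ey \<in> F2\<close> in \<open>auto simp: F2_def F1_def\<close>)
  then show False using insep_nocut[OF H] by blast
qed

lemma circle_in_H:
  assumes "circle G Z" "snd Z \<subseteq> snd H" "is_sub G H" shows "sub_le Z H"
  using assms circle_vertices[OF assms(1)] unfolding sub_le_def is_sub_def by blast

lemma ear_path:
  assumes wf: "sgraph_wf G" and H: "inseparable G H" and D: "circle G D" and DH: "sub_le D H"
    and z: "z \<in> fst D" and f: "f \<in> snd H" "f \<notin> snd D" "ends G f = {z,u}" "u \<noteq> z"
  shows "\<exists>vs es. ispath G (edges G) vs es \<and> 0 < length es \<and> vs!0 = z \<and> vs!length es \<in> fst D \<and>
     set es \<inter> snd D = {} \<and> (\<forall>i. 0 < i \<and> i < length es \<longrightarrow> vs!i \<notin> fst D) \<and> set es \<subseteq> snd H \<and> f \<in> set es"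
proof -
  have Hs: "is_sub G H" using insep_sub[OF H] .
  have fE: "f \<in> edges G" using f Hs by (auto simp: is_sub_def)
  have cardH: "card (ends G e) = 1 \<or> card (ends G e) = 2" if "e \<in> snd H" for e
    using wf_ends(2)[OF wf] Hs that by (auto simp: is_sub_def)
  have Dends: "e \<in> snd D \<Longrightarrow> ends G e \<subseteq> fst D" for e using circle_ends[OF D] by blast
  show ?thesis
  proof (cases "u \<in> fst D")
    case True
    have p: "ispath G (edges G) [z,u] [f]" using f fE by (auto simp: ispath_def)
    show ?thesis
      by (rule exI[of _ "[z,u]"], rule exI[of _ "[f]"]) (use p True f in auto)
  next
    case False
    obtain e0 where e0: "e0 \<in> snd D" "z \<in> ends G e0" using circle_vertex_edge[OF D z] by blast
    have e0H: "e0 \<in> snd H" using e0 DH by (auto simp: sub_le_def)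
    have "card (ends G e0) = 2"
    proof -
      have "card (ends G e0) \<noteq> 1"
      proof
        assume "card (ends G e0) = 1"
        then obtain a where "ends G e0 = {a}" by (rule card_1_singletonE)
        then have "f = e0" using insep_loop[OF H e0H _ f(1)] by blast
        then show False using f e0 by blast
      qed
      then show ?thesis using cardH[OF e0H] by blast
    qed
    then obtain c d where cd: "c \<noteq> d" "ends G e0 = {c,d}" unfolding card_2_iff by blast
    obtain y' where y': "y' \<in> ends G e0" "y' \<noteq> z"
    proof (cases "z = c")
      case True then show ?thesis using that[of d] cd by auto
    next
      case False then show ?thesis using that[of c] cd by auto
    qed
    have y'D: "y' \<in> fst D" using Dends[OF e0(1)] y' by blast
    have y'H: "y' \<in> fst H" using y'D DH by (auto simp: sub_le_def)
    have uH: "u \<in> fst H" using f Hs by (auto simp: is_sub_def)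
    define F' where "F' = {e\<in>snd H. z \<notin> ends G e}"
    have w1: "(adj_in G F')\<^sup>*\<^sup>* u y'" unfolding F'_def using two_conn[OF wf H uH f(4) y'H y'(2)] .
    have w2: "\<forall>e\<in>F'. card (ends G e) = 1 \<or> card (ends G e) = 2" using cardH F'_def by blast
    obtain vs0 es0 where p0: "ispath G F' vs0 es0" "vs0!0 = u" "vs0!length es0 = y'"
      using walk_to_path[OF w1 w2] by (elim exE conjE) (rule that; assumption)
    define k where "k = (LEAST k. vs0!k \<in> fst D)"
    have kex: "vs0!length es0 \<in> fst D" using p0 y'D by simp
    have kle: "k \<le> length es0" unfolding k_def using kex by (rule Least_le)
    have kD: "vs0!k \<in> fst D" unfolding k_def using kex by (rule LeastI)
    have kmin: "vs0!i \<notin> fst D" if "i < k" for i using not_less_Least[of i "\<lambda>k. vs0!k \<in> fst D"] that k_def by blast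
    have k0: "0 < k" using kD p0(2) False by (cases k) auto
    define vs1 where "vs1 = take (Suc k) vs0"
    define es1 where "es1 = take k es0"
    have p1: "ispath G F' vs1 es1" unfolding vs1_def es1_def using ispath_take[OF p0(1) kle] .
    have l1: "length es1 = k" using kle es1_def by simp
    have len0: "length vs0 = Suc (length es0)" using ispath_len[OF p0(1)] .
    have vs1i: "vs1!i = vs0!i" if "i \<le> k" for i using that vs1_def by simp
    have es1i: "es1!i = es0!i" if "i < k" for i using that es1_def by simp
    have zvs1: "z \<notin> set vs1"
    proof
      assume "z \<in> set vs1"
      then obtain i where i: "i < length vs1" "vs1!i = z" by (auto simp: in_set_conv_nth)
      have il: "i \<le> k" using i ispath_len[OF p1] l1 by simp
      show False
      proof (cases i)
        case 0 then show False using i vs1i p0(2) f(4) by auto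
      next
        case (Suc j)
        have "j < length es0" using il Suc kle by simp
        then have "es0!j \<in> F'" "vs0!Suc j \<in> ends G (es0!j)"
          using ispath_set[OF p0(1)] ispath_ends[OF p0(1)] by auto
        then show False using i vs1i[OF il] Suc F'_def by auto
      qed
    qed
    have F'E: "F' \<subseteq> edges G" using Hs F'_def by (auto simp: is_sub_def)
    have p2: "ispath G (edges G) (z#vs1) (f#es1)"
      using ispath_cons[OF ispath_mono[OF p1 F'E] zvs1] f fE vs1i[of 0] p0(2) by (simp add: insert_commute)
    have disj: "set (f#es1) \<inter> snd D = {}"
    proof -
      have "es1!i \<notin> snd D" if "i < k" for i
      proof
        assume "es1!i \<in> snd D"
        moreover have "vs1!i \<in> ends G (es1!i)" using ispath_ends[OF p1] that l1 by simp
        ultimately have "vs0!i \<in> fst D" using Dends vs1i that by fastforce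
        then show False using kmin that by blast
      qed
      then show ?thesis using f(2) l1 by (auto simp: in_set_conv_nth)
    qed
    show ?thesis
    proof (rule exI[of _ "z#vs1"], rule exI[of _ "f#es1"], intro conjI)
      show "ispath G (edges G) (z#vs1) (f#es1)" using p2 .
      show "0 < length (f#es1)" by simp
      show "(z#vs1)!0 = z" by simp
      show "(z#vs1)!length (f#es1) \<in> fst D" using l1 vs1i[of k] kD by simp
      show "set (f#es1) \<inter> snd D = {}" using disj .
      show "\<forall>i. 0 < i \<and> i < length (f#es1) \<longrightarrow> (z#vs1)!i \<notin> fst D"
      proof (intro allI impI)
        fix i assume i: "0 < i \<and> i < length (f#es1)"
        then obtain j where j: "i = Suc j" "j < k" using l1 by (cases i) auto
        then show "(z#vs1)!i \<notin> fst D" using kmin vs1i by simp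
      qed
      show "set (f#es1) \<subseteq> snd H" using f(1) ispath_set[OF p1] F'_def by auto
      show "f \<in> set (f#es1)" by simp
    qed
  qed
qed

lemma ear_step:
  assumes wf: "sgraph_wf G" and H: "inseparable G H" and D: "circle G D" and nD: "negative G D"
    and DH: "sub_le D H" and z: "z \<in> fst D" and f: "f \<in> snd H" "f \<notin> snd D" "z \<in> ends G f"
    and c2: "card (ends G f) = 2"
  shows "\<exists>Z. circle G Z \<and> negative G Z \<and> sub_le Z H \<and> f \<in> snd Z"
proof -
  obtain u where u: "ends G f = {z,u}" "u \<noteq> z"
  proof -
    obtain c d where cd: "c \<noteq> d" "ends G f = {c,d}" using c2 unfolding card_2_iff by blast
    show ?thesis
    proof (cases "z = c")
      case True then show ?thesis using that[of d] cd by auto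
    next
      case False then have "z = d" using cd f(3) by auto
      then show ?thesis using that[of c] cd by auto
    qed
  qed
  obtain vs es where p: "ispath G (edges G) vs es" "0 < length es" "vs!0 = z" "vs!length es \<in> fst D"
     "set es \<inter> snd D = {}" "\<forall>i. 0 < i \<and> i < length es \<longrightarrow> vs!i \<notin> fst D" "set es \<subseteq> snd H" "f \<in> set es"
    using ear_path[OF wf H D DH z f(1,2) u] by blast
  obtain Z where Z: "circle G Z" "negative G Z" "set es \<subseteq> snd Z" "snd Z \<subseteq> set es \<union> snd D"
    using theta[OF wf D nD p(1,2)] p z by blast
  have "snd Z \<subseteq> snd H" using Z(4) p(7) DH by (auto simp: sub_le_def)
  then have "sub_le Z H" using circle_in_H[OF Z(1) _ insep_sub[OF H]] by blast
  then show ?thesis using Z p(8) by blast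
qed

lemma neg_everywhere:
  assumes wf: "sgraph_wf G" and H: "inseparable G H" and D: "circle G D" and nD: "negative G D"
    and DH: "sub_le D H" and x: "x \<in> fst H"
  shows "\<exists>Z. circle G Z \<and> negative G Z \<and> sub_le Z H \<and> x \<in> fst Z"
proof -
  obtain d where d: "d \<in> fst D" using circle_nonempty[OF D] by blast
  have dH: "d \<in> fst H" using d DH by (auto simp: sub_le_def)
  have "(adj_in G (snd H))\<^sup>*\<^sup>* d x" using insep_conn[OF H dH x] .
  then show ?thesis
  proof (induction rule: rtranclp_induct)
    case base then show ?case using D nD DH d by blast
  next
    case (step y u)
    then obtain Z where Z: "circle G Z" "negative G Z" "sub_le Z H" "y \<in> fst Z" by blast
    obtain f where f: "f \<in> snd H" "y \<in> ends G f" "u \<in> ends G f" using step(2) by (auto simp: adj_in_def)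
    show ?case
    proof (cases "u \<in> fst Z")
      case True then show ?thesis using Z by blast
    next
      case False
      have fZ: "f \<notin> snd Z" using False f circle_ends[OF Z(1)] by blast
      have yu: "y \<noteq> u" using False Z by blast
      have "card (ends G f) = 1 \<or> card (ends G f) = 2"
        using wf_ends(2)[OF wf] insep_sub[OF H] f by (auto simp: is_sub_def)
      moreover have "card (ends G f) \<noteq> 1"
      proof
        assume "card (ends G f) = 1"
        then obtain a where "ends G f = {a}" by (rule card_1_singletonE)
        then show False using f yu by auto
      qed
      ultimately have c2: "card (ends G f) = 2" by blast
      obtain W where W: "circle G W" "negative G W" "sub_le W H" "f \<in> snd W"
        using ear_step[OF wf H Z(1,2,3,4) f(1) fZ f(2) c2] by blast
      have "u \<in> fst W" using circle_ends[OF W(1) W(4)] f by blast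
      then show ?thesis using W by blast
    qed
  qed
qed



lemma restr_simps[simp]: "ends (restr G B) = ends G" "neg (restr G B) = neg G"
  "verts (restr G B) = fst B" "edges (restr G B) = snd B"
  by (auto simp: restr_def)

lemma deg_in_restr[simp]: "deg_in (restr G B) = deg_in G"
  by (rule ext, rule ext) (simp add: deg_in_def)
lemma adj_in_restr[simp]: "adj_in (restr G B) = adj_in G"
  by (intro ext) (simp add: adj_in_def)
lemma connected_restr[simp]: "connected_sub (restr G B) = connected_sub G"
  by (intro ext) (simp add: connected_sub_def)
lemma negative_restr[simp]: "negative (restr G B) = negative G"
  by (intro ext) (simp add: negative_def)

lemma circle_restr:
  assumes "is_sub G B"
  shows "circle (restr G B) D \<longleftrightarrow> circle G D \<and> sub_le D B"
  using assms unfolding circle_def is_sub_def sub_le_def by auto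

lemma unbalanced_restr:
  assumes "is_sub G B"
  shows "unbalanced (restr G B) \<longleftrightarrow> (\<exists>D. circle G D \<and> negative G D \<and> sub_le D B)"
  unfolding unbalanced_def using circle_restr[OF assms] by auto

lemma ends_nonempty: "sgraph_wf G \<Longrightarrow> e \<in> edges G \<Longrightarrow> ends G e \<noteq> {}"
  using wf_ends(2) by fastforce

lemma circle_insep:
  assumes wf: "sgraph_wf G" and C: "circle G C"
  shows "inseparable G C"
proof -
  have nocut: "\<not> has_cutpoint G C"
  proof
    assume "has_cutpoint G C"
    then obtain x F1 F2 where F: "F1 \<union> F2 = snd C" "F1 \<inter> F2 = {}" "F1 \<noteq> {}" "F2 \<noteq> {}"
      "(\<Union>(ends G ` F1)) \<inter> (\<Union>(ends G ` F2)) \<subseteq> {x}" unfolding has_cutpoint_def by (elim exE conjE) (rule that; assumption)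
    define V1 where "V1 = \<Union>(ends G ` F1)"
    define V2 where "V2 = \<Union>(ends G ` F2)"
    have finC: "finite (snd C)" "finite (fst C)" using circle_fin[OF wf C] by auto
    have sub12: "F1 \<subseteq> snd C" "F2 \<subseteq> snd C" using F(1) by auto
    have fin1: "finite F1" "finite F2" using finite_subset[OF sub12(1) finC(1)] finite_subset[OF sub12(2) finC(1)] by auto
    have CE: "snd C \<subseteq> edges G" using circle_edges[OF C] .
    have V1C: "V1 \<subseteq> fst C" using F(1) circle_ends[OF C] unfolding V1_def by blast
    obtain e1 where e1: "e1 \<in> F1" using F(3) by blast
    obtain a where a: "a \<in> ends G e1" using ends_nonempty[OF wf] e1 F(1) CE by blast
    obtain e2 where e2: "e2 \<in> F2" using F(4) by blast
    obtain b where b: "b \<in> ends G e2" using ends_nonempty[OF wf] e2 F(1) CE by blast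
    have aV1: "a \<in> V1" using a e1 V1_def by blast
    have bV2: "b \<in> V2" using b e2 V2_def by blast
    have aC: "a \<in> fst C" using aV1 V1C by blast
    have bC: "b \<in> fst C" using b e2 F(1) circle_ends[OF C] by blast
    have meet: "V1 \<inter> V2 \<noteq> {}"
    proof
      assume disjV: "V1 \<inter> V2 = {}"
      have "(adj_in G (snd C))\<^sup>*\<^sup>* a b" using C aC bC by (auto simp: circle_def connected_sub_def)
      then have "b \<in> V1"
      proof (induction rule: rtranclp_induct)
        case base then show ?case using aV1 .
      next
        case (step z z')
        then obtain e where e: "e \<in> snd C" "z \<in> ends G e" "z' \<in> ends G e" by (auto simp: adj_in_def)
        show ?case
        proof (cases "e \<in> F1")
          case True then show ?thesis using e V1_def by blast
        next
          case False then have "e \<in> F2" using e F(1) by blast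
          then have "z \<in> V2" using e V2_def by blast
          then show ?thesis using step disjV by blast
        qed
      qed
      then show False using bV2 disjV by blast
    qed
    moreover have "V1 \<inter> V2 \<subseteq> {x}" using F(5) unfolding V1_def V2_def .
    ultimately have x12: "V1 \<inter> V2 = {x}" by blast
    have degC: "deg_in G (snd C) y = deg_in G F1 y + deg_in G F2 y" for y
      using deg_in_union[OF fin1 F(2)] F(1) by simp
    have cards: "e \<in> snd C \<Longrightarrow> card (ends G e) = 1 \<or> card (ends G e) = 2" for e
      using wf_ends(2)[OF wf] CE by blast
    have d2out: "deg_in G F2 y = 0" if "y \<notin> V2" for y
      using that fin1 unfolding V2_def by (intro deg_in_zero) auto
    have d1out: "deg_in G F1 y = 0" if "y \<notin> V1" for y
      using that fin1 unfolding V1_def by (intro deg_in_zero) auto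
    have xV: "x \<in> V1" "x \<in> V2" using x12 by auto
    have dx1: "deg_in G F1 x \<ge> 1"
    proof -
      obtain e where e: "e \<in> F1" "x \<in> ends G e" using xV unfolding V1_def by blast
      then show ?thesis using deg_in_pos[OF fin1(1) e] cards[of e] sub12 by blast
    qed
    have dx2: "deg_in G F2 x \<ge> 1"
    proof -
      obtain e where e: "e \<in> F2" "x \<in> ends G e" using xV unfolding V2_def by blast
      then show ?thesis using deg_in_pos[OF fin1(2) e] cards[of e] sub12 by blast
    qed
    have xC: "x \<in> fst C" using xV V1C by blast
    have dx: "deg_in G F1 x = 1" using degC[of x] circle_deg[OF C xC] dx1 dx2 by simp
    define g where "g y = (if y = x then 1 else 0::nat)" for y
    define h where "h y = deg_in G F1 y - g y" for y
    have gh: "deg_in G F1 y = g y + h y" for y using dx unfolding g_def h_def by auto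
    have evh: "even (h y)" for y
    proof (cases "y = x")
      case True then show ?thesis using dx unfolding h_def g_def by simp
    next
      case False
      show ?thesis
      proof (cases "y \<in> V1")
        case True
        then have "y \<notin> V2" using x12 False by blast
        then have "deg_in G F1 y = 2" using degC[of y] d2out circle_deg[OF C] True V1C by auto
        then show ?thesis using False unfolding h_def g_def by simp
      next
        case False2: False
        then show ?thesis using d1out False unfolding h_def g_def by simp
      qed
    qed
    have hs: "(\<Sum>y\<in>fst C. deg_in G F1 y) = 2 * card F1"
      using handshake[OF fin1(1) finC(2)] F(1) circle_ends[OF C] cards by blast
    have "(\<Sum>y\<in>fst C. deg_in G F1 y) = (\<Sum>y\<in>fst C. g y) + (\<Sum>y\<in>fst C. h y)"
      using gh by (simp add: sum.distrib)
    moreover have "(\<Sum>y\<in>fst C. g y) = 1" using xC finC unfolding g_def by (simp add: sum.delta)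
    moreover have "even (\<Sum>y\<in>fst C. h y)" using evh by (simp add: dvd_sum)
    ultimately have "2 * card F1 = Suc (\<Sum>y\<in>fst C. h y)" "even (\<Sum>y\<in>fst C. h y)" using hs by simp_all
    obtain k where k: "(\<Sum>y\<in>fst C. h y) = 2 * k" using \<open>even (\<Sum>y\<in>fst C. h y)\<close> by (rule evenE)
    have "2 * card F1 = Suc (2 * k)" using k \<open>2 * card F1 = Suc (\<Sum>y\<in>fst C. h y)\<close> by simp
    then show False by presburger
  qed
  show ?thesis using C nocut unfolding circle_def inseparable_def by blast
qed



lemma insep_union:
  assumes wf: "sgraph_wf G" and H1: "inseparable G H1" and H2: "inseparable G H2"
    and e: "e \<in> snd H1" "e \<in> snd H2"
  shows "inseparable G (fst H1 \<union> fst H2, snd H1 \<union> snd H2)"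
proof -
  have S1: "is_sub G H1" using insep_sub[OF H1] .
  have S2: "is_sub G H2" using insep_sub[OF H2] .
  have eE: "e \<in> edges G" using S1 e by (auto simp: is_sub_def)
  obtain c where c: "c \<in> ends G e" using ends_nonempty[OF wf eE] by blast
  have c1: "c \<in> fst H1" using S1 e c by (auto simp: is_sub_def)
  have c2: "c \<in> fst H2" using S2 e c by (auto simp: is_sub_def)
  define U where "U = (fst H1 \<union> fst H2, snd H1 \<union> snd H2)"
  have issub: "is_sub G U" using S1 S2 unfolding U_def is_sub_def by auto
  have reachc: "(adj_in G (snd U))\<^sup>*\<^sup>* x c" if "x \<in> fst U" for x
  proof -
    have "x \<in> fst H1 \<or> x \<in> fst H2" using that U_def by auto
    then show ?thesis
    proof
      assume "x \<in> fst H1"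
      then have "(adj_in G (snd H1))\<^sup>*\<^sup>* x c" using insep_conn[OF H1 _ c1] by blast
      then show ?thesis by (rule adj_mono) (auto simp: U_def)
    next
      assume "x \<in> fst H2"
      then have "(adj_in G (snd H2))\<^sup>*\<^sup>* x c" using insep_conn[OF H2 _ c2] by blast
      then show ?thesis by (rule adj_mono) (auto simp: U_def)
    qed
  qed
  have conn: "connected_sub G U"
    unfolding connected_sub_def
  proof (intro conjI ballI)
    show "fst U \<noteq> {}" using c1 U_def by auto
    fix x y assume "x \<in> fst U" "y \<in> fst U"
    then show "(adj_in G (snd U))\<^sup>*\<^sup>* x y" using reachc adj_rsym rtranclp_trans by metis
  qed
  have side: "snd H \<subseteq> F1 \<or> snd H \<subseteq> F2" if H: "inseparable G H"
    and F: "F1 \<union> F2 = snd U" "F1 \<inter> F2 = {}" "(\<Union>(ends G ` F1)) \<inter> (\<Union>(ends G ` F2)) \<subseteq> {x}"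
    and HU: "snd H \<subseteq> snd U" for H F1 F2 x
  proof (rule ccontr)
    assume "\<not> ?thesis"
    then have n1: "F1 \<inter> snd H \<noteq> {}" and n2: "F2 \<inter> snd H \<noteq> {}" using F(1) HU by blast+
    have "has_cutpoint G H"
      unfolding has_cutpoint_def
      by (rule exI[of _ x], rule exI[of _ "F1 \<inter> snd H"], rule exI[of _ "F2 \<inter> snd H"])
         (use F HU n1 n2 in blast)
    then show False using insep_nocut[OF H] by blast
  qed
  have nocut: "\<not> has_cutpoint G U"
  proof
    assume "has_cutpoint G U"
    then obtain x F1 F2 where F: "F1 \<union> F2 = snd U" "F1 \<inter> F2 = {}" "F1 \<noteq> {}" "F2 \<noteq> {}"
      "(\<Union>(ends G ` F1)) \<inter> (\<Union>(ends G ` F2)) \<subseteq> {x}"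
      unfolding has_cutpoint_def by (elim exE conjE) (rule that; assumption)
    have s1: "snd H1 \<subseteq> F1 \<or> snd H1 \<subseteq> F2" using side[OF H1 F(1,2,5)] U_def by auto
    have s2: "snd H2 \<subseteq> F1 \<or> snd H2 \<subseteq> F2" using side[OF H2 F(1,2,5)] U_def by auto
    show False
    proof (cases "snd H1 \<subseteq> F1")
      case True
      then have "snd H2 \<subseteq> F1" using s2 e F(2) by blast
      then have "F2 = {}" using True F(1,2) U_def by auto
      then show False using F(4) by blast
    next
      case False
      then have "snd H1 \<subseteq> F2" using s1 by blast
      then have "snd H2 \<subseteq> F2" using s2 e F(2) by blast
      then have "F1 = {}" using \<open>snd H1 \<subseteq> F2\<close> F(1,2) U_def by auto
      then show False using F(3) by blast
    qed
  qed
  show ?thesis using issub conn nocut unfolding inseparable_def U_def by blast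
qed

lemma block_insep: "block G B \<Longrightarrow> inseparable G B" by (simp add: block_def)

lemma block_unique:
  assumes wf: "sgraph_wf G" and B1: "block G B1" and B2: "block G B2"
    and e: "e \<in> snd B1" "e \<in> snd B2"
  shows "B1 = B2"
proof -
  define U where "U = (fst B1 \<union> fst B2, snd B1 \<union> snd B2)"
  have U: "inseparable G U" using insep_union[OF wf block_insep[OF B1] block_insep[OF B2] e] U_def by simp
  have "sub_le B1 U" "sub_le B2 U" unfolding U_def sub_le_def by auto
  then have "U = B1" "U = B2" using B1 B2 U unfolding block_def by blast+
  then show ?thesis by simp
qed

lemma block_exists:
  assumes wf: "sgraph_wf G" and H: "inseparable G H"
  shows "\<exists>B. block G B \<and> sub_le H B"
proof -
  define f where "f H' = card (fst H') + card (snd H')" for H' :: "('a,'b) subg"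
  define P where "P m \<longleftrightarrow> (\<exists>H'. inseparable G H' \<and> sub_le H H' \<and> f H' = m)" for m
  have fv: "finite (verts G)" "finite (edges G)" using wf_fin[OF wf] by auto
  have bnd: "f H' \<le> card (verts G) + card (edges G)" if "inseparable G H'" for H'
  proof -
    have "fst H' \<subseteq> verts G" "snd H' \<subseteq> edges G" using insep_sub[OF that] by (auto simp: is_sub_def)
    then show ?thesis unfolding f_def using card_mono fv by (metis add_mono)
  qed
  have P0: "P (f H)" unfolding P_def using H by (intro exI[of _ H]) (auto simp: sub_le_def)
  have bb: "\<forall>m. P m \<longrightarrow> m \<le> card (verts G) + card (edges G)" unfolding P_def using bnd by blast
  obtain m where m: "P m" "\<forall>k. P k \<longrightarrow> k \<le> m" using Nat.ex_has_greatest_nat[of P "f H", OF P0 bb] by blast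
  obtain B where B: "inseparable G B" "sub_le H B" "f B = m" using m(1) unfolding P_def by blast
  have "block G B"
    unfolding block_def
  proof (intro conjI allI impI)
    show "inseparable G B" using B(1) .
    fix H' assume H': "inseparable G H' \<and> sub_le B H'"
    then have "P (f H')" unfolding P_def using B(2) by (intro exI[of _ H']) (auto simp: sub_le_def)
    then have le: "f H' \<le> f B" using m(2) B(3) by blast
    have s: "fst B \<subseteq> fst H'" "snd B \<subseteq> snd H'" using H' by (auto simp: sub_le_def)
    have fin: "finite (fst H')" "finite (snd H')" using insep_sub[of G H'] H' fv
      by (auto simp: is_sub_def intro: finite_subset)
    have c1: "card (fst B) \<le> card (fst H')" "card (snd B) \<le> card (snd H')"
      using card_mono[OF fin(1) s(1)] card_mono[OF fin(2) s(2)] by auto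
    then have "card (fst B) = card (fst H')" "card (snd B) = card (snd H')" using le unfolding f_def by auto
    then have "fst B = fst H'" "snd B = snd H'" using card_subset_eq fin s by metis+
    then show "H' = B" by (simp add: prod_eq_iff)
  qed
  then show ?thesis using B(2) by blast
qed



lemma supp_simps[simp]:
  "verts (suppress G B v e1 e2) = fst B - {v}"
  "edges (suppress G B v e1 e2) = Some ` (snd B - {e1, e2}) \<union> {None}"
  "ends (suppress G B v e1 e2) (Some e) = ends G e"
  "ends (suppress G B v e1 e2) None = (ends G e1 \<union> ends G e2) - {v}"
  "neg (suppress G B v e1 e2) (Some e) = neg G e"
  "neg (suppress G B v e1 e2) None = (neg G e1 \<noteq> neg G e2)"
  by (auto simp: suppress_def)

lemma deg_local: "deg_in G F x = deg_in G {e\<in>F. x \<in> ends G e} x"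
proof -
  have "{e\<in>F. ends G e = {x}} = {e\<in>{e\<in>F. x \<in> ends G e}. ends G e = {x}}" by auto
  moreover have "{e\<in>F. x \<in> ends G e \<and> card (ends G e) = 2} = {e\<in>{e\<in>F. x \<in> ends G e}. x \<in> ends G e \<and> card (ends G e) = 2}" by auto
  ultimately show ?thesis unfolding deg_in_def by simp
qed

lemma deg_mono: "finite B \<Longrightarrow> A \<subseteq> B \<Longrightarrow> deg_in G A x \<le> deg_in G B x"
proof -
  assume "finite B" "A \<subseteq> B"
  then show ?thesis using deg_diff[of B A G x] by simp
qed

lemma filter_image: "{y \<in> f ` S. P y} = f ` {x \<in> S. P (f x)}"
  by blast

lemma deg_Some:
  "deg_in (suppress G B v e1 e2) (Some ` S) x = deg_in G S x"
proof -
  let ?G' = "suppress G B v e1 e2"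
  show ?thesis unfolding deg_in_def filter_image by (simp add: card_image)
qed

lemma nneg_Some:
  "nneg (suppress G B v e1 e2) (Some ` S) = nneg G S"
proof -
  show ?thesis unfolding nneg_def filter_image by (simp add: card_image)
qed

locale supp =
  fixes G :: "('v,'e) sgraph" and B :: "('v,'e) subg" and v :: 'v and e1 e2 :: 'e and a b :: 'v
  assumes wf: "sgraph_wf G" and Bs: "is_sub G B"
    and at: "{e\<in>snd B. v \<in> ends G e} = {e1, e2}" and e12: "e1 \<noteq> e2"
    and l1: "ends G e1 = {v, a}" "a \<noteq> v" and l2: "ends G e2 = {v, b}" "b \<noteq> v"
begin

abbreviation "G' \<equiv> suppress G B v e1 e2"

lemma endsNone: "ends G' None = {a, b}"
  using l1 l2 by auto

lemma e12B: "e1 \<in> snd B" "e2 \<in> snd B" using at by auto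

lemma finB: "finite (snd B)" "finite (fst B)"
  using Bs wf_fin[OF wf] by (auto simp: is_sub_def intro: finite_subset)

lemma notv: "e \<in> snd B \<Longrightarrow> e \<noteq> e1 \<Longrightarrow> e \<noteq> e2 \<Longrightarrow> v \<notin> ends G e"
  using at by blast

lemma deg_e1: "x \<noteq> v \<Longrightarrow> deg_in G {e1} x = (if x = a then 1 else 0)"
  using l1 by (auto simp: deg_in_single)
lemma deg_e2: "x \<noteq> v \<Longrightarrow> deg_in G {e2} x = (if x = b then 1 else 0)"
  using l2 by (auto simp: deg_in_single)
lemma deg_None: "deg_in G' {None} x = (if x = a then 1 else 0) + (if x = b then 1 else 0)"
proof (cases "a = b")
  case True then show ?thesis using endsNone by (auto simp: deg_in_single)
next
  case False then show ?thesis using endsNone by (auto simp: deg_in_single)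
qed

lemma deg_transfer:
  assumes S: "S \<subseteq> snd B - {e1, e2}" and x: "x \<noteq> v"
  shows "deg_in G' (Some ` S \<union> {None}) x = deg_in G (S \<union> {e1, e2}) x"
proof -
  have finS: "finite S" using S finB finite_subset by blast
  have "deg_in G' (Some ` S \<union> {None}) x = deg_in G' (Some ` S) x + deg_in G' {None} x"
    using deg_in_union[of "Some ` S" "{None}" G' x] finS by auto
  moreover have "deg_in G (S \<union> {e1, e2}) x = deg_in G S x + deg_in G {e1, e2} x"
    using deg_in_union[of S "{e1,e2}" G x] finS S by auto
  moreover have "deg_in G {e1, e2} x = deg_in G {e1} x + deg_in G {e2} x"
    using deg_in_union[of "{e1}" "{e2}" G x] e12 by (simp add: insert_commute)
  ultimately show ?thesis using deg_Some deg_None deg_e1[OF x] deg_e2[OF x] by simp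
qed

lemma neg_transfer:
  assumes S: "S \<subseteq> snd B - {e1, e2}"
  shows "odd (nneg G' (Some ` S \<union> {None})) \<longleftrightarrow> odd (nneg G (S \<union> {e1, e2}))"
proof -
  have finS: "finite S" using S finB finite_subset by blast
  have "nneg G' (Some ` S \<union> {None}) = nneg G' (Some ` S) + nneg G' {None}"
    using nneg_union[of "Some ` S" "{None}" G'] finS by auto
  moreover have "nneg G (S \<union> {e1, e2}) = nneg G S + nneg G {e1, e2}"
    using nneg_union[of S "{e1,e2}" G] finS S by auto
  moreover have "nneg G {e1, e2} = nneg G {e1} + nneg G {e2}"
    using nneg_union[of "{e1}" "{e2}" G] e12 by (simp add: insert_commute)
  moreover have "nneg G' {None} = (if neg G e1 \<noteq> neg G e2 then 1 else 0)"
  proof -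
    have "{e\<in>{None}. neg G' e} = (if neg G e1 \<noteq> neg G e2 then {None} else {})" by auto
    then show ?thesis unfolding nneg_def by simp
  qed
  moreover have "nneg G {e} = (if neg G e then 1 else 0)" for e
  proof -
    have "{e'\<in>{e}. neg G e'} = (if neg G e then {e} else {})" by auto
    then show ?thesis unfolding nneg_def by simp
  qed
  ultimately show ?thesis using nneg_Some[of G B v e1 e2 S] by (cases "neg G e1"; cases "neg G e2") auto
qed

lemma deg_v_local:
  assumes "finite F" "{e\<in>F. v \<in> ends G e} \<subseteq> {e1,e2}"
  shows "deg_in G F v \<le> deg_in G {e\<in>F. v \<in> ends G e} v"
  using deg_local[of G F v] by simp

lemma deg_e12_v: "deg_in G {e1,e2} v = 2"
proof -
  have "deg_in G {e1, e2} v = deg_in G {e1} v + deg_in G {e2} v"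
    using deg_in_union[of "{e1}" "{e2}" G v] e12 by (simp add: insert_commute)
  moreover have "deg_in G {e1} v = 1" "deg_in G {e2} v = 1" using l1 l2 by (auto simp: deg_in_single)
  ultimately show ?thesis by simp
qed

lemma circle_uses:
  assumes D: "circle G D" and DB: "sub_le D B" and vD: "v \<in> fst D"
  shows "e1 \<in> snd D" "e2 \<in> snd D"
proof -
  have finD: "finite (snd D)" using circle_fin[OF wf D] by simp
  have d2: "deg_in G (snd D) v = 2" using circle_deg[OF D vD] .
  have loc: "{e\<in>snd D. v \<in> ends G e} \<subseteq> {e1,e2}" using at DB by (auto simp: sub_le_def)
  have one: "deg_in G {e} v = 1" if "e = e1 \<or> e = e2" for e using that l1 l2 by (auto simp: deg_in_single)
  have "deg_in G (snd D) v = deg_in G {e\<in>snd D. v \<in> ends G e} v" using deg_local .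
  show "e1 \<in> snd D"
  proof (rule ccontr)
    assume "e1 \<notin> snd D"
    then have "{e\<in>snd D. v \<in> ends G e} \<subseteq> {e2}" using loc by auto
    then have "deg_in G {e\<in>snd D. v \<in> ends G e} v \<le> deg_in G {e2} v" by (intro deg_mono) auto
    then show False using d2 one[of e2] deg_local[of G "snd D" v] by simp
  qed
  show "e2 \<in> snd D"
  proof (rule ccontr)
    assume "e2 \<notin> snd D"
    then have "{e\<in>snd D. v \<in> ends G e} \<subseteq> {e1}" using loc by auto
    then have "deg_in G {e\<in>snd D. v \<in> ends G e} v \<le> deg_in G {e1} v" by (intro deg_mono) auto
    then show False using d2 one[of e1] deg_local[of G "snd D" v] by simp
  qed
qed

lemma circ_supp_eq: "circ_suppress D v e1 e2 = (fst D - {v}, Some ` (snd D - {e1,e2}) \<union> {None})"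
  by (simp add: circ_suppress_def)

lemma down:
  assumes D: "circle G D" and DB: "sub_le D B" and vD: "v \<in> fst D"
  shows "circle G' (circ_suppress D v e1 e2)"
    "negative G' (circ_suppress D v e1 e2) \<longleftrightarrow> negative G D"
proof -
  have u: "e1 \<in> snd D" "e2 \<in> snd D" using circle_uses[OF assms] by auto
  define S where "S = snd D - {e1,e2}"
  have SB: "S \<subseteq> snd B - {e1,e2}" using DB S_def by (auto simp: sub_le_def)
  have SD: "S \<union> {e1,e2} = snd D" using u S_def by auto
  have cs: "circ_suppress D v e1 e2 = (fst D - {v}, Some ` S \<union> {None})" using circ_supp_eq S_def by simp
  have aD: "a \<in> fst D" "b \<in> fst D" using circle_ends[OF D] u l1 l2 by auto
  have Dends: "ends G e \<subseteq> fst D" if "e \<in> snd D" for e using circle_ends[OF D that] .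
  have issub: "is_sub G' (fst D - {v}, Some ` S \<union> {None})"
    unfolding is_sub_def
  proof (intro conjI ballI)
    show "fst (fst D - {v}, Some ` S \<union> {None}) \<subseteq> verts G'" using DB by (auto simp: sub_le_def)
    show "snd (fst D - {v}, Some ` S \<union> {None}) \<subseteq> edges G'" using SB by auto
    fix e' assume "e' \<in> snd (fst D - {v}, Some ` S \<union> {None})"
    then have "e' = None \<or> (\<exists>e\<in>S. e' = Some e)" by auto
    then show "ends G' e' \<subseteq> fst (fst D - {v}, Some ` S \<union> {None})"
    proof
      assume "e' = None" then show ?thesis using endsNone aD l1 l2 by auto
    next
      assume "\<exists>e\<in>S. e' = Some e"
      then obtain e where e: "e \<in> S" "e' = Some e" by blast
      then have "v \<notin> ends G e" using notv SB by blast
      then show ?thesis using e Dends S_def by auto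
    qed
  qed
  have deg: "deg_in G' (Some ` S \<union> {None}) x = 2" if "x \<in> fst D - {v}" for x
    using deg_transfer[OF SB] that SD circle_deg[OF D] by auto
  have conn: "connected_sub G' (fst D - {v}, Some ` S \<union> {None})"
    unfolding connected_sub_def
  proof (intro conjI ballI)
    show "fst (fst D - {v}, Some ` S \<union> {None}) \<noteq> {}" using aD l1 by auto
    define R' where "R' = adj_in G' (Some ` S \<union> {None})"
    define fz where "fz z = (if z = v then a else z)" for z
    have key: "R'\<^sup>*\<^sup>* x (fz z)" if "x \<in> fst D" "x \<noteq> v" "(adj_in G (snd D))\<^sup>*\<^sup>* x z" for x z
      using that(3)
    proof (induction rule: rtranclp_induct)
      case base then show ?case using that fz_def by simp
    next
      case (step z z')
      obtain e where e: "e \<in> snd D" "z \<in> ends G e" "z' \<in> ends G e" using step(2) by (auto simp: adj_in_def)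
      have Nab: "R' a b" "R' b a" "R' a a" "R' b b" unfolding R'_def adj_in_def using endsNone by auto
      show ?case
      proof (cases "e \<in> {e1,e2}")
        case False
        then have "e \<in> S" using e S_def by blast
        moreover have "v \<notin> ends G e" using notv False e DB by (auto simp: sub_le_def)
        ultimately have "R' z z'" "z \<noteq> v" "z' \<noteq> v" unfolding R'_def adj_in_def using e by force+
        then show ?thesis using step(3) fz_def by auto
      next
        case True
        then have "ends G e = {v,a} \<or> ends G e = {v,b}" using l1 l2 by auto
        then have zz: "z \<in> {v,a,b}" "z' \<in> {v,a,b}" "ends G e = {v,a} \<longrightarrow> z \<in> {v,a} \<and> z' \<in> {v,a}"
          "ends G e = {v,b} \<longrightarrow> z \<in> {v,b} \<and> z' \<in> {v,b}" using e by auto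
        have "R'\<^sup>*\<^sup>* (fz z) (fz z')"
          using zz Nab l1(2) l2(2) \<open>ends G e = {v,a} \<or> ends G e = {v,b}\<close> unfolding fz_def
          by (auto intro: r_into_rtranclp)
        then show ?thesis using step(3) by (metis rtranclp_trans)
      qed
    qed
    fix x y assume x: "x \<in> fst (fst D - {v}, Some ` S \<union> {None})" and y: "y \<in> fst (fst D - {v}, Some ` S \<union> {None})"
    have "(adj_in G (snd D))\<^sup>*\<^sup>* x y" using D x y by (auto simp: circle_def connected_sub_def)
    then have "R'\<^sup>*\<^sup>* x (fz y)" using key x by auto
    then show "(adj_in G' (snd (fst D - {v}, Some ` S \<union> {None})))\<^sup>*\<^sup>* x y" using y fz_def R'_def by auto
  qed
  show "circle G' (circ_suppress D v e1 e2)" unfolding cs circle_def using issub conn deg by auto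
  show "negative G' (circ_suppress D v e1 e2) \<longleftrightarrow> negative G D"
    unfolding cs negative_nneg using neg_transfer[OF SB] SD by simp
qed

lemma up:
  assumes D': "circle G' D'" and N: "None \<in> snd D'"
  shows "\<exists>D. circle G D \<and> sub_le D B \<and> v \<in> fst D \<and> circ_suppress D v e1 e2 = D' \<and>
           (negative G' D' \<longleftrightarrow> negative G D)"
proof -
  define S where "S = {e. Some e \<in> snd D'}"
  define D where "D = (insert v (fst D'), S \<union> {e1,e2})"
  have D'sub: "is_sub G' D'" using circle_sub[OF D'] .
  have SB: "S \<subseteq> snd B - {e1,e2}" using D'sub S_def by (auto simp: is_sub_def)
  have sD': "snd D' = Some ` S \<union> {None}"
  proof
    show "snd D' \<subseteq> Some ` S \<union> {None}"
    proof
      fix e' assume "e' \<in> snd D'"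
      then show "e' \<in> Some ` S \<union> {None}" using S_def by (cases e') auto
    qed
    show "Some ` S \<union> {None} \<subseteq> snd D'" using N S_def by auto
  qed
  have fD': "fst D' \<subseteq> fst B - {v}" using D'sub by (auto simp: is_sub_def)
  have abD': "a \<in> fst D'" "b \<in> fst D'" using circle_ends[OF D' N] endsNone by auto
  have vG: "v \<in> verts G"
  proof -
    have "ends G e1 \<subseteq> fst B" "fst B \<subseteq> verts G" using Bs e12B by (auto simp: is_sub_def)
    then show ?thesis using l1 by auto
  qed
  have SD'e: "ends G e \<subseteq> fst D'" if "e \<in> S" for e
    using circle_ends[OF D', of "Some e"] that S_def by auto
  have issub: "is_sub G D"
    unfolding is_sub_def D_def
  proof (intro conjI ballI)
    show "fst (insert v (fst D'), S \<union> {e1, e2}) \<subseteq> verts G" using vG fD' Bs by (auto simp: is_sub_def)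
    show "snd (insert v (fst D'), S \<union> {e1, e2}) \<subseteq> edges G" using SB e12B Bs by (auto simp: is_sub_def)
    fix e assume "e \<in> snd (insert v (fst D'), S \<union> {e1, e2})"
    then show "ends G e \<subseteq> fst (insert v (fst D'), S \<union> {e1, e2})" using SD'e l1 l2 abD' by auto
  qed
  have finS: "finite S" using SB finB finite_subset by blast
  have degv: "deg_in G (S \<union> {e1,e2}) v = 2"
  proof -
    have "{e\<in>S \<union> {e1,e2}. v \<in> ends G e} = {e1,e2}" using SB notv l1 l2 by auto
    then show ?thesis using deg_local[of G "S \<union> {e1,e2}" v] deg_e12_v by simp
  qed
  have degx: "deg_in G (S \<union> {e1,e2}) x = 2" if "x \<in> fst D'" for x
  proof -
    have "x \<noteq> v" using that fD' by auto
    then have "deg_in G (S \<union> {e1,e2}) x = deg_in G' (snd D') x" using deg_transfer[OF SB] sD' by simp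
    then show ?thesis using circle_deg[OF D' that] by simp
  qed
  define R where "R = adj_in G (S \<union> {e1,e2})"
  have Rav: "R a v" "R v b" "R b v" "R v a" unfolding R_def adj_in_def using l1 l2 by auto
  have lift: "R\<^sup>*\<^sup>* z z'" if "(adj_in G' (snd D'))\<^sup>*\<^sup>* z z'" for z z'
    using that
  proof (induction rule: rtranclp_induct)
    case base then show ?case by simp
  next
    case (step y y')
    obtain e' where e': "e' \<in> snd D'" "y \<in> ends G' e'" "y' \<in> ends G' e'" using step(2) by (auto simp: adj_in_def)
    have "R\<^sup>*\<^sup>* y y'"
    proof (cases e')
      case None
      then have "y \<in> {a,b}" "y' \<in> {a,b}" using e' endsNone by auto
      then show ?thesis using Rav by (auto intro: rtranclp.rtrancl_into_rtrancl)
    next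
      case (Some e)
      then have "e \<in> S" using e' S_def by auto
      then have "R y y'" unfolding R_def adj_in_def using e' Some by auto
      then show ?thesis by simp
    qed
    then show ?case using step(3) by (metis rtranclp_trans)
  qed
  have tov: "R\<^sup>*\<^sup>* x v" if "x \<in> insert v (fst D')" for x
  proof (cases "x = v")
    case True then show ?thesis by simp
  next
    case False
    then have "x \<in> fst D'" using that by simp
    then have "(adj_in G' (snd D'))\<^sup>*\<^sup>* x a" using D' abD' by (auto simp: circle_def connected_sub_def)
    then have "R\<^sup>*\<^sup>* x a" using lift by blast
    then show ?thesis using Rav by (meson rtranclp.rtrancl_into_rtrancl)
  qed
  have conn: "connected_sub G D"
    unfolding connected_sub_def
  proof (intro conjI ballI)
    show "fst D \<noteq> {}" using D_def by simp
    fix x y assume "x \<in> fst D" "y \<in> fst D"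
    then have "R\<^sup>*\<^sup>* x v" "R\<^sup>*\<^sup>* y v" using tov D_def by auto
    then show "(adj_in G (snd D))\<^sup>*\<^sup>* x y" unfolding D_def R_def
      using adj_rsym rtranclp_trans R_def by (metis snd_conv)
  qed
  have circ: "circle G D" unfolding circle_def using issub conn degv degx D_def by auto
  have vnot: "v \<notin> fst D'" using fD' by auto
  have SI: "S \<inter> {e1,e2} = {}" using SB by auto
  have cs: "circ_suppress D v e1 e2 = D'"
  proof -
    have "S \<union> {e1,e2} - {e1,e2} = S" using SI by auto
    then show ?thesis unfolding circ_supp_eq D_def using vnot sD' by (simp add: prod_eq_iff)
  qed
  have ng: "negative G' D' \<longleftrightarrow> negative G D"
    unfolding negative_nneg D_def using neg_transfer[OF SB] sD' by simp
  have "sub_le D B" using SB e12B fD' Bs e12B l1 unfolding D_def sub_le_def is_sub_def by auto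
  then show ?thesis using circ cs ng D_def by auto
qed

lemma inj:
  assumes D: "circle G D" "sub_le D B" "v \<in> fst D" and E: "circle G E" "sub_le E B" "v \<in> fst E"
    and eq: "circ_suppress D v e1 e2 = circ_suppress E v e1 e2"
  shows "D = E"
proof -
  have u: "e1 \<in> snd D" "e2 \<in> snd D" "e1 \<in> snd E" "e2 \<in> snd E"
    using circle_uses[OF D] circle_uses[OF E] by auto
  have f: "fst D - {v} = fst E - {v}" and s: "Some ` (snd D - {e1,e2}) \<union> {None} = Some ` (snd E - {e1,e2}) \<union> {None}"
    using eq unfolding circ_supp_eq by auto
  have "Some ` (snd D - {e1,e2}) = Some ` (snd E - {e1,e2})"
  proof -
    have "None \<notin> Some ` (snd D - {e1,e2})" "None \<notin> Some ` (snd E - {e1,e2})" by auto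
    then show ?thesis using s by blast
  qed
  then have "snd D - {e1,e2} = snd E - {e1,e2}" by (simp add: inj_image_eq_iff)
  then have "snd D = snd E" using u by blast
  moreover have "fst D = fst E" using f D(3) E(3) by blast
  ultimately show ?thesis by (simp add: prod_eq_iff)
qed

end



lemma link_other:
  assumes "card (ends G e) = 2" "v \<in> ends G e"
  obtains a where "ends G e = {v, a}" "a \<noteq> v"
proof -
  obtain c d where cd: "c \<noteq> d" "ends G e = {c,d}" using assms(1) unfolding card_2_iff by blast
  show ?thesis
  proof (cases "v = c")
    case True then show ?thesis using that[of d] cd by auto
  next
    case False then have "v = d" using cd assms(2) by auto
    then show ?thesis using that[of c] cd by auto
  qed
qed

lemma insep_loop_only:
  assumes H: "inseparable G H" and l: "l \<in> snd H" "card (ends G l) = 1"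
  shows "snd H = {l}"
proof -
  obtain x where "ends G l = {x}" using l(2) by (rule card_1_singletonE)
  then show ?thesis using insep_loop[OF H l(1)] l(1) by blast
qed

lemma circle_in_block:
  assumes wf: "sgraph_wf G" and D: "circle G D"
  shows "\<exists>B. block G B \<and> sub_le D B"
  using block_exists[OF wf circle_insep[OF wf D]] .

lemma B_card:
  assumes wf: "sgraph_wf G" and B: "block G B" and e: "e \<in> snd B"
  shows "card (ends G e) = 1 \<or> card (ends G e) = 2"
  using wf_ends(2)[OF wf] insep_sub[OF block_insep[OF B]] e by (auto simp: is_sub_def)

theorem mainTheorem10:
  fixes G :: "('v,'e) sgraph" and v :: 'v and C :: "('v,'e) subg"
  assumes "sgraph_wf G"
    and "v \<in> verts G"
    and "\<forall>B. block G B \<and> v \<in> fst B \<longrightarrow> (\<exists>D. circle G D \<and> sub_le D B)"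
    and "circle G C" and "v \<in> fst C"
  shows "neg_vertex_battery G v C \<longleftrightarrow>
    (\<exists>B. block G B \<and> sub_le C B \<and>
       unbalanced (restr G B) \<and>
       (\<forall>B'. block G B' \<and> v \<in> fst B' \<and> unbalanced (restr G B') \<longrightarrow> B' = B) \<and>
       deg_in G (snd B) v = 2 \<and>
       (\<forall>e1 e2. e1 \<noteq> e2 \<and> {e\<in>snd B. v \<in> ends G e} = {e1, e2} \<longrightarrow>
          neg_edge_battery (suppress G B v e1 e2) None (circ_suppress C v e1 e2)))"
proof -
  have wf: "sgraph_wf G" and C: "circle G C" and vC: "v \<in> fst C" using assms by auto
  obtain eC where eC: "eC \<in> snd C" using circle_nonempty[OF C] by blast
  show ?thesis
  proof
    assume bat: "neg_vertex_battery G v C"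
    have nC: "negative G C" using bat by (simp add: neg_vertex_battery_def)
    have uniq: "D = C" if "circle G D" "v \<in> fst D" "negative G D" for D
      using bat that unfolding neg_vertex_battery_def by blast
    obtain B where B: "block G B" "sub_le C B" using circle_in_block[OF wf C] by blast
    have Bi: "inseparable G B" using block_insep[OF B(1)] .
    have Bs: "is_sub G B" using insep_sub[OF Bi] .
    have CB: "snd C \<subseteq> snd B" "fst C \<subseteq> fst B" using B(2) by (auto simp: sub_le_def)
    have unb: "unbalanced (restr G B)" unfolding unbalanced_restr[OF Bs] using C nC B(2) by blast
    have ub: "B' = B" if h: "block G B'" "v \<in> fst B'" "unbalanced (restr G B')" for B'
    proof -
      have B's: "is_sub G B'" using insep_sub[OF block_insep[OF h(1)]] .
      obtain D0 where D0: "circle G D0" "negative G D0" "sub_le D0 B'"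
        using h(3) unfolding unbalanced_restr[OF B's] by blast
      obtain Z where Z: "circle G Z" "negative G Z" "sub_le Z B'" "v \<in> fst Z"
        using neg_everywhere[OF wf block_insep[OF h(1)] D0(1,2,3) h(2)] by blast
      have "Z = C" using uniq Z by blast
      then have "eC \<in> snd B'" using Z(3) eC by (auto simp: sub_le_def)
      then show ?thesis using block_unique[OF wf h(1) B(1)] eC CB by blast
    qed
    have deg: "deg_in G (snd B) v = 2"
    proof (cases "\<exists>l\<in>snd B. card (ends G l) = 1")
      case True
      then obtain l where l: "l \<in> snd B" "card (ends G l) = 1" by blast
      have "snd B = {l}" using insep_loop_only[OF Bi l] .
      moreover have "snd C \<noteq> {}" using eC by blast
      ultimately have "snd C = snd B" using CB(1) by (metis subset_singletonD)
      then show ?thesis using circle_deg[OF C vC] by simp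
    next
      case False
      show ?thesis
      proof (rule ccontr)
        assume nd: "deg_in G (snd B) v \<noteq> 2"
        have "snd B \<subseteq> edges G" using Bs by (simp add: is_sub_def)
        then have finB: "finite (snd B)" using finite_subset[OF _ wf_fin(2)[OF wf]] by blast
        have "deg_in G (snd B) v = deg_in G (snd C) v + deg_in G (snd B - snd C) v"
          using deg_diff[OF finB CB(1)] .
        then have "deg_in G (snd B - snd C) v \<noteq> 0" using nd circle_deg[OF C vC] by simp
        then have "\<exists>f\<in>snd B - snd C. v \<in> ends G f" by (rule deg_nonzero_edge)
        then obtain f where f: "f \<in> snd B - snd C" "v \<in> ends G f" by blast
        have c2: "card (ends G f) = 2" using B_card[OF wf B(1), of f] False f by auto
        obtain Z where Z: "circle G Z" "negative G Z" "sub_le Z B" "f \<in> snd Z"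
          using ear_step[OF wf Bi C nC B(2) vC _ _ f(2) c2] f by blast
        have "v \<in> fst Z" using circle_ends[OF Z(1) Z(4)] f by blast
        then have "Z = C" using uniq Z by blast
        then show False using Z(4) f by blast
      qed
    qed
    have part2: "neg_edge_battery (suppress G B v e1 e2) None (circ_suppress C v e1 e2)"
      if e: "e1 \<noteq> e2" "{e\<in>snd B. v \<in> ends G e} = {e1, e2}" for e1 e2
    proof -
      have e1B: "e1 \<in> snd B" "v \<in> ends G e1" "e2 \<in> snd B" "v \<in> ends G e2" using e by blast+
      have "card (ends G e1) = 2"
      proof -
        have "card (ends G e1) \<noteq> 1"
        proof
          assume "card (ends G e1) = 1"
          then have "snd B = {e1}" using insep_loop_only[OF Bi e1B(1)] by blast
          then show False using e1B e(1) by auto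
        qed
        then show ?thesis using B_card[OF wf B(1) e1B(1)] by blast
      qed
      then obtain a where a: "ends G e1 = {v, a}" "a \<noteq> v" using e1B link_other by metis
      have "card (ends G e2) = 2"
      proof -
        have "card (ends G e2) \<noteq> 1"
        proof
          assume "card (ends G e2) = 1"
          then have "snd B = {e2}" using insep_loop_only[OF Bi e1B(3)] by blast
          then show False using e1B e(1) by auto
        qed
        then show ?thesis using B_card[OF wf B(1) e1B(3)] by blast
      qed
      then obtain b where b: "ends G e2 = {v, b}" "b \<noteq> v" using e1B link_other by metis
      interpret S: supp G B v e1 e2 a b
        by unfold_locales (use wf Bs e a b in auto)
      have c1: "circle (suppress G B v e1 e2) (circ_suppress C v e1 e2)" using S.down[OF C B(2) vC] by blast
      have n1: "negative (suppress G B v e1 e2) (circ_suppress C v e1 e2)" using S.down[OF C B(2) vC] nC by blast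
      have N: "None \<in> snd (circ_suppress C v e1 e2)" by (simp add: circ_suppress_def)
      show ?thesis
        unfolding neg_edge_battery_def
      proof (intro conjI allI impI)
        show "circle (suppress G B v e1 e2) (circ_suppress C v e1 e2)" using c1 .
        show "None \<in> snd (circ_suppress C v e1 e2)" using N .
        show "negative (suppress G B v e1 e2) (circ_suppress C v e1 e2)" using n1 .
        fix D' assume D': "circle (suppress G B v e1 e2) D' \<and> None \<in> snd D' \<and> negative (suppress G B v e1 e2) D'"
        then obtain D where D: "circle G D" "sub_le D B" "v \<in> fst D" "circ_suppress D v e1 e2 = D'"
          "negative (suppress G B v e1 e2) D' \<longleftrightarrow> negative G D" using S.up by blast
        have "D = C" using uniq D D' by blast
        then show "D' = circ_suppress C v e1 e2" using D(4) by simp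
      qed
    qed
    show "\<exists>B. block G B \<and> sub_le C B \<and>
       unbalanced (restr G B) \<and>
       (\<forall>B'. block G B' \<and> v \<in> fst B' \<and> unbalanced (restr G B') \<longrightarrow> B' = B) \<and>
       deg_in G (snd B) v = 2 \<and>
       (\<forall>e1 e2. e1 \<noteq> e2 \<and> {e\<in>snd B. v \<in> ends G e} = {e1, e2} \<longrightarrow>
          neg_edge_battery (suppress G B v e1 e2) None (circ_suppress C v e1 e2))"
      using B unb ub deg part2 by blast
  next
    assume "\<exists>B. block G B \<and> sub_le C B \<and>
       unbalanced (restr G B) \<and>
       (\<forall>B'. block G B' \<and> v \<in> fst B' \<and> unbalanced (restr G B') \<longrightarrow> B' = B) \<and>
       deg_in G (snd B) v = 2 \<and>
       (\<forall>e1 e2. e1 \<noteq> e2 \<and> {e\<in>snd B. v \<in> ends G e} = {e1, e2} \<longrightarrow>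
          neg_edge_battery (suppress G B v e1 e2) None (circ_suppress C v e1 e2))"
    then obtain B where B: "block G B" "sub_le C B" "unbalanced (restr G B)"
      and ub: "\<forall>B'. block G B' \<and> v \<in> fst B' \<and> unbalanced (restr G B') \<longrightarrow> B' = B"
      and deg: "deg_in G (snd B) v = 2"
      and p2: "\<forall>e1 e2. e1 \<noteq> e2 \<and> {e\<in>snd B. v \<in> ends G e} = {e1, e2} \<longrightarrow>
          neg_edge_battery (suppress G B v e1 e2) None (circ_suppress C v e1 e2)"
      by blast
    have Bi: "inseparable G B" using block_insep[OF B(1)] .
    have Bs: "is_sub G B" using insep_sub[OF Bi] .
    have CB: "snd C \<subseteq> snd B" "fst C \<subseteq> fst B" using B(2) by (auto simp: sub_le_def)
    have U: "sub_le D B" if D: "circle G D" "v \<in> fst D" "negative G D" for D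
    proof -
      obtain B'' where B'': "block G B''" "sub_le D B''" using circle_in_block[OF wf D(1)] by blast
      have "v \<in> fst B''" using B''(2) D(2) by (auto simp: sub_le_def)
      moreover have "unbalanced (restr G B'')"
        unfolding unbalanced_restr[OF insep_sub[OF block_insep[OF B''(1)]]] using D B''(2) by blast
      ultimately have "B'' = B" using ub B''(1) by blast
      then show ?thesis using B''(2) by simp
    qed
    have goal: "negative G C \<and> (\<forall>D. circle G D \<and> v \<in> fst D \<and> negative G D \<longrightarrow> D = C)"
    proof (cases "\<exists>l\<in>snd B. card (ends G l) = 1")
      case True
      then obtain l where l: "l \<in> snd B" "card (ends G l) = 1" by blast
      have sB: "snd B = {l}" using insep_loop_only[OF Bi l] .
      have isC: "Z = C" if h: "circle G Z" "sub_le Z B" for Z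
      proof -
        obtain eZ where "eZ \<in> snd Z" using circle_nonempty[OF h(1)] by blast
        then have "snd Z = {l}" using h(2) sB by (auto simp: sub_le_def)
        moreover have "snd C = {l}" using CB eC sB by auto
        ultimately show ?thesis using circle_subset[OF wf h(1) C] by simp
      qed
      obtain D0 where "circle G D0" "negative G D0" "sub_le D0 B"
        using B(3) unfolding unbalanced_restr[OF Bs] by blast
      then have "negative G C" using isC by blast
      moreover have "\<forall>D. circle G D \<and> v \<in> fst D \<and> negative G D \<longrightarrow> D = C" using U isC by blast
      ultimately show ?thesis by blast
    next
      case False
      have noloop: "{e\<in>snd B. ends G e = {v}} = {}" using False by auto
      have links: "{e\<in>snd B. v \<in> ends G e} = {e\<in>snd B. v \<in> ends G e \<and> card (ends G e) = 2}"
        using False B_card[OF wf B(1)] by auto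
      have "card {e\<in>snd B. v \<in> ends G e} = 2" using deg unfolding deg_in_def noloop links by simp
      then obtain e1 e2 where e: "e1 \<noteq> e2" "{e\<in>snd B. v \<in> ends G e} = {e1, e2}"
        unfolding card_2_iff by blast
      have e1B: "e1 \<in> snd B" "v \<in> ends G e1" "e2 \<in> snd B" "v \<in> ends G e2" using e by blast+
      have c1: "card (ends G e1) = 2" "card (ends G e2) = 2" using False B_card[OF wf B(1)] e1B by auto
      obtain a where a: "ends G e1 = {v, a}" "a \<noteq> v" using e1B c1 link_other by metis
      obtain b where b: "ends G e2 = {v, b}" "b \<noteq> v" using e1B c1 link_other by metis
      interpret S: supp G B v e1 e2 a b
        by unfold_locales (use wf Bs e a b in auto)
      have bat: "neg_edge_battery (suppress G B v e1 e2) None (circ_suppress C v e1 e2)" using p2 e by blast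
      have nC: "negative G C" using bat S.down[OF C B(2) vC] by (simp add: neg_edge_battery_def)
      have "D = C" if D: "circle G D" "v \<in> fst D" "negative G D" for D
      proof -
        have DB: "sub_le D B" using U[OF D] .
        have "circle (suppress G B v e1 e2) (circ_suppress D v e1 e2)"
          "negative (suppress G B v e1 e2) (circ_suppress D v e1 e2)"
          using S.down[OF D(1) DB D(2)] D(3) by auto
        moreover have "None \<in> snd (circ_suppress D v e1 e2)" by (simp add: circ_suppress_def)
        ultimately have "circ_suppress D v e1 e2 = circ_suppress C v e1 e2"
          using bat unfolding neg_edge_battery_def by blast
        then show ?thesis using S.inj[OF D(1) DB D(2) C B(2) vC] by blast
      qed
      then show ?thesis using nC by blast
    qed
    then show "neg_vertex_battery G v C" unfolding neg_vertex_battery_def using C vC by blast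
  qed
qed



end
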